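(* Let $\Xi$ be a nonzero finite measure on $\Delta$, and let $\gamma$ and $v$ be as in the context. (i) If $a=0$ and $\mu:=\int_\Delta|u|\,\nu(\mathrm du)<\infty$, then $v(x,t)\sim xe^{-\mu t}$ as $x\to\infty$, for every $t\ge0$. (ii) If $\int_c^\infty\frac{\mathrm du}{\gamma(u)}<\infty$ for some $c>1$, then for every $t>0$ there exists a unique $v(t)\in(1,\infty)$ with $\int_{v(t)}^\infty\frac{\mathrm du}{\gamma(u)}=t$, and $\lim_{x\to\infty}v(x,t)=v(t)$. (iii) If the limit $\kappa:=\lim_{x\to\infty}x\gamma''(x)$ exists and is finite, then for every $t\ge0$ there is a function $L_t:[1,\infty)\to(0,\infty)$, slowly varying at $\infty$, such that $v(x,t)=x^{e^{-\kappa t}}L_t(x)$ for all $x\ge1$.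
   Context: Let $\Delta:=\{u=(u_1,u_2,\ldots):u_1\ge u_2\ge\cdots\ge0,\ \sum_{i\ge1}u_i\le1\}$, and for $u\in\Delta$ write $|u|:=\sum_{i\ge1}u_i$, $(u,u):=\sum_{i\ge1}u_i^2$, and $0:=(0,0,\ldots)$. Let $\Xi$ be a finite measure on $\Delta$, $a:=\Xi(\{0\})$, $\Xi_0:=\Xi-a\delta_0$, and $\nu(\mathrm du):=\Xi_0(\mathrm du)/(u,u)$ on $\Delta\setminus\{0\}$. Define $\gamma:[0,\infty)\to\mathbb R$ by $$\gamma(x):=a\frac{x(x-1)}{2}+\int_\Delta\sum_{i\ge1}\big((1-u_i)^x-1+xu_i\big)\,\nu(\mathrm du),\qquad x\ge0,$$ which is $C^\infty$ on $(0,\infty)$ and positive on $(1,\infty)$ when $\Xi\neq0$. Define $v:[1,\infty)\times[0,\infty)\to[1,\infty)$ by $v(1,t):=1$ and, for $x>1$, $t\ge0$, $v(x,t)$ is the unique number in $(1,x]$ with $\int_{v(x,t)}^x\frac{\mathrm du}{\gamma(u)}=t$. *)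

theory Defs
  imports "HOL-Probability.Probability" "HOL-Library.Landau_Symbols"
begin

text \<open>The simplex Delta of non-increasing nonnegative sequences with total mass at most 1
  (indices start at 0 instead of 1).\<close>
definition Delta :: "(nat \<Rightarrow> real) set" where
  "Delta = {u. (\<forall>i. u (Suc i) \<le> u i) \<and> (\<forall>i. 0 \<le> u i) \<and> summable u \<and> suminf u \<le> 1}"

definition Delta_M :: "(nat \<Rightarrow> real) measure" where
  "Delta_M = restrict_space (Pi\<^sub>M UNIV (\<lambda>_. borel)) Delta"

text \<open>a = Xi({0})\<close>
definition atom0 :: "(nat \<Rightarrow> real) measure \<Rightarrow> real" where
  "atom0 Xi = measure Xi {(\<lambda>_. 0)}"

definition nu :: "(nat \<Rightarrow> real) measure \<Rightarrow> (nat \<Rightarrow> real) measure" where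
  "nu Xi = density Xi (\<lambda>u. if u = (\<lambda>_. 0) then 0 else ennreal (1 / (\<Sum>i. (u i)^2)))"

text \<open>(1 - u_i)^x with the convention 0^0 = 1.\<close>
definition gamma :: "(nat \<Rightarrow> real) measure \<Rightarrow> real \<Rightarrow> real" where
  "gamma Xi x = atom0 Xi * (x * (x - 1) / 2)
     + (\<integral>u. (\<Sum>i. (if x = 0 then 1 else (1 - u i) powr x) - 1 + x * u i) \<partial>nu Xi)"

definition vfun :: "(nat \<Rightarrow> real) measure \<Rightarrow> real \<Rightarrow> real \<Rightarrow> real" where
  "vfun Xi x t = (if x \<le> 1 then 1 else
     (THE w. 1 < w \<and> w \<le> x \<and> integral {w..x} (\<lambda>u. 1 / gamma Xi u) = t))"

definition slowly_varying :: "(real \<Rightarrow> real) \<Rightarrow> bool" where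
  "slowly_varying L \<longleftrightarrow> L \<in> borel_measurable (restrict_space borel {1..}) \<and>
     (\<forall>c>0. ((\<lambda>x. L (c * x) / L x) \<longlongrightarrow> 1) at_top)"

end

theory Submission
  imports Defs
begin


lemma mono_by_deriv:
  fixes f f' :: "real \<Rightarrow> real"
  assumes "a \<le> b" "\<And>x. a \<le> x \<Longrightarrow> x \<le> b \<Longrightarrow> (f has_real_derivative f' x) (at x)"
    "\<And>x. a \<le> x \<Longrightarrow> x \<le> b \<Longrightarrow> f' x \<ge> 0"
  shows "f a \<le> f b"
proof (cases "a = b")
  case False
  then have "a < b" using assms by auto
  show ?thesis
  proof (rule DERIV_nonneg_imp_increasing_open[OF assms(1)])
    show "continuous_on {a..b} f"
      using assms by (intro continuous_at_imp_continuous_on ballI DERIV_isCont) auto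
  qed (use assms in force)
qed simp

lemma deriv_bound:
  fixes F F' K K' :: "real \<Rightarrow> real"
  assumes "a \<le> b"
    and "\<And>y. a \<le> y \<Longrightarrow> y \<le> b \<Longrightarrow> (F has_real_derivative F' y) (at y)"
    and "\<And>y. a \<le> y \<Longrightarrow> y \<le> b \<Longrightarrow> (K has_real_derivative K' y) (at y)"
    and "\<And>y. a \<le> y \<Longrightarrow> y \<le> b \<Longrightarrow> \<bar>F' y\<bar> \<le> e * K' y"
  shows "\<bar>F b - F a\<bar> \<le> e * (K b - K a)"
proof -
  have 1: "e * K a - F a \<le> e * K b - F b"
  proof (rule mono_by_deriv[where f="\<lambda>y. e * K y - F y" and f'="\<lambda>y. e * K' y - F' y"])
    fix x assume "a \<le> x" "x \<le> b"
    then show "((\<lambda>y. e * K y - F y) has_real_derivative e * K' x - F' x) (at x)"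
      using assms(2,3) by (auto intro!: derivative_eq_intros)
    show "e * K' x - F' x \<ge> 0" using assms(4)[OF \<open>a \<le> x\<close> \<open>x \<le> b\<close>] by (simp add: abs_le_iff)
  qed (use assms in auto)
  have 2: "e * K a + F a \<le> e * K b + F b"
  proof (rule mono_by_deriv[where f="\<lambda>y. e * K y + F y" and f'="\<lambda>y. e * K' y + F' y"])
    fix x assume "a \<le> x" "x \<le> b"
    then show "((\<lambda>y. e * K y + F y) has_real_derivative e * K' x + F' x) (at x)"
      using assms(2,3) by (auto intro!: derivative_eq_intros)
    show "e * K' x + F' x \<ge> 0" using assms(4)[OF \<open>a \<le> x\<close> \<open>x \<le> b\<close>] by (simp add: abs_le_iff)
  qed (use assms in auto)
  show ?thesis using 1 2 by (auto simp: algebra_simps abs_le_iff)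
qed

locale gfun =
  fixes g g1 :: "real \<Rightarrow> real" and C :: real
  assumes g_1: "g 1 = 0"
  and g_pos: "\<And>x. x > 1 \<Longrightarrow> g x > 0"
  and g_near1: "\<And>x. 1 \<le> x \<Longrightarrow> x \<le> 2 \<Longrightarrow> g x \<le> C * (x - 1)"
  and g_deriv: "\<And>x. x > 1 \<Longrightarrow> (g has_real_derivative g1 x) (at x)"
begin

definition h :: "real \<Rightarrow> real" where "h u = 1 / g u"

definition G :: "real \<Rightarrow> real" where
  "G y = (if 2 \<le> y then integral {2..y} h else - integral {y..2} h)"

lemma C_pos: "C > 0"
proof -
  have "0 < g (3/2)" by (rule g_pos) auto
  also have "\<dots> \<le> C * (3/2 - 1)" by (rule g_near1) auto
  finally show ?thesis by simp
qed

lemma isCont_g: "x > 1 \<Longrightarrow> isCont g x"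
  using g_deriv DERIV_isCont by blast

lemma h_pos: "x > 1 \<Longrightarrow> h x > 0"
  using g_pos by (simp add: h_def)

lemma isCont_h: "x > 1 \<Longrightarrow> isCont h x"
  unfolding h_def using isCont_g g_pos
  by (intro continuous_intros) (auto simp: less_imp_neq[symmetric])

lemma cont_h: "1 < a \<Longrightarrow> continuous_on {a..b} h"
  by (intro continuous_at_imp_continuous_on ballI isCont_h) auto

lemma int_h: "1 < a \<Longrightarrow> h integrable_on {a..b}"
  by (intro integrable_continuous_interval cont_h)

lemma int_eq: assumes "1 < a" "a \<le> b" shows "integral {a..b} h = G b - G a"
proof -
  consider "b \<le> 2" | "a \<le> 2" "2 \<le> b" | "2 \<le> a" using assms by linarith
  then show ?thesis
  proof cases
    case 1
    have "integral {a..b} h + integral {b..2} h = integral {a..2} h"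
      using assms 1 Henstock_Kurzweil_Integration.integral_combine[where f=h and a=a and c=b and b=2] int_h[of a 2] by auto
    then show ?thesis using 1 assms by (auto simp: G_def)
  next
    case 2
    have "integral {a..2} h + integral {2..b} h = integral {a..b} h"
      using assms 2 Henstock_Kurzweil_Integration.integral_combine[where f=h and a=a and c=2 and b=b] int_h[of a b] by auto
    then show ?thesis using 2 assms by (auto simp: G_def)
  next
    case 3
    have "integral {2..a} h + integral {a..b} h = integral {2..b} h"
      using assms 3 Henstock_Kurzweil_Integration.integral_combine[where f=h and a=2 and c=a and b=b] int_h[of 2 b] by auto
    then show ?thesis using 3 assms by (auto simp: G_def)
  qed
qed

lemma G_deriv: assumes "y > 1" shows "(G has_real_derivative h y) (at y)"
proof -
  define a where "a = (1 + y) / 2"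
  have a: "1 < a" "a < y" using assms by (auto simp: a_def)
  have "((\<lambda>x. integral {a..x} h) has_real_derivative h y) (at y within {a..y+1})"
    using a by (intro integral_has_real_derivative cont_h) auto
  then have "((\<lambda>x. integral {a..x} h) has_real_derivative h y) (at y)"
    using a by (subst (asm) at_within_interior) auto
  then have "((\<lambda>x. G a + integral {a..x} h) has_real_derivative h y) (at y)"
    by (auto intro!: derivative_eq_intros)
  then show ?thesis
  proof (rule has_field_derivative_transform_within_open[where S="{a<..}"])
    show "G a + integral {a..x} h = G x" if "x \<in> {a<..}" for x
      using int_eq[of a x] a that by auto
  qed (use a in auto)
qed

lemma isCont_G: "y > 1 \<Longrightarrow> isCont G y"
  using G_deriv DERIV_isCont by blast

lemma G_less: assumes "1 < a" "a < b" shows "G a < G b"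
  using assms by (intro DERIV_pos_imp_increasing[OF assms(2)]) (auto intro!: G_deriv h_pos exI)

lemma G_le_iff: assumes "1 < a" "1 < b" shows "G a \<le> G b \<longleftrightarrow> a \<le> b"
  using G_less[of a b] G_less[of b a] assms by (cases a b rule: linorder_cases) auto

lemma G_eq_iff: assumes "1 < a" "1 < b" shows "G a = G b \<longleftrightarrow> a = b"
  using G_le_iff[OF assms] G_le_iff[OF assms(2,1)] by auto

lemma G_le_ln: assumes "1 < y" "y \<le> 2" shows "G y \<le> ln (y - 1) / C"
proof -
  have "G y - ln (y - 1) / C \<le> G 2 - ln (2 - 1) / C"
  proof (rule mono_by_deriv[where f="\<lambda>x. G x - ln (x - 1) / C" and f'="\<lambda>x. h x - 1 / (C * (x - 1))"])
    fix x assume x: "y \<le> x" "x \<le> 2"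
    show "((\<lambda>x. G x - ln (x - 1) / C) has_real_derivative h x - 1 / (C * (x - 1))) (at x)"
      using x assms C_pos by (auto intro!: derivative_eq_intros G_deriv simp: divide_simps)
    have "g x \<le> C * (x - 1)" using x assms by (intro g_near1) auto
    moreover have "g x > 0" using x assms by (intro g_pos) auto
    ultimately show "h x - 1 / (C * (x - 1)) \<ge> 0"
      unfolding h_def by (simp add: frac_le)
  qed (use assms in auto)
  then show ?thesis by (simp add: G_def)
qed

lemma G_unbounded_below: "\<exists>y>1. y \<le> 2 \<and> G y < M"
proof -
  define m where "m = min M 0 - 1"
  define y where "y = 1 + exp (C * m)"
  have "C * m \<le> 0" using C_pos by (intro mult_nonneg_nonpos) (auto simp: m_def)
  then have "exp (C * m) \<le> 1" by simp
  then have y: "1 < y" "y \<le> 2" by (auto simp: y_def)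
  have "G y \<le> ln (y - 1) / C" by (rule G_le_ln[OF y])
  also have "\<dots> = m" using C_pos by (simp add: y_def)
  also have "\<dots> < M" by (simp add: m_def)
  finally show ?thesis using y by blast
qed

definition vf :: "real \<Rightarrow> real \<Rightarrow> real" where
  "vf x t = (if x \<le> 1 then 1 else (THE w. 1 < w \<and> w \<le> x \<and> integral {w..x} h = t))"

lemma vf_ex: assumes "x > 1" "t \<ge> 0" shows "\<exists>w. 1 < w \<and> w \<le> x \<and> G w = G x - t"
proof -
  obtain y0 where y0: "y0 > 1" "G y0 < G x - t" using G_unbounded_below by blast
  have "y0 < x" using y0 assms G_le_iff[of x y0] by auto
  have "\<exists>w\<ge>y0. w \<le> x \<and> G w = G x - t"
    using y0 \<open>y0 < x\<close> assms by (intro IVT) (auto intro!: isCont_G)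
  then obtain w where "w \<ge> y0" "w \<le> x" "G w = G x - t" by blast
  then show ?thesis using y0 by (intro exI[of _ w]) auto
qed

lemma vf_char: assumes "x > 1" "t \<ge> 0"
  shows "1 < vf x t \<and> vf x t \<le> x \<and> G (vf x t) = G x - t"
proof -
  obtain w where w: "1 < w" "w \<le> x" "G w = G x - t" using vf_ex[OF assms] by blast
  have P: "1 < w \<and> w \<le> x \<and> integral {w..x} h = t" using w int_eq[of w x] by auto
  have "vf x t = (THE w. 1 < w \<and> w \<le> x \<and> integral {w..x} h = t)"
    using assms by (simp add: vf_def)
  also have "\<dots> = w"
  proof (rule the_equality)
    show "1 < w \<and> w \<le> x \<and> integral {w..x} h = t" by (rule P)
    fix w' assume "1 < w' \<and> w' \<le> x \<and> integral {w'..x} h = t"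
    then have "1 < w'" "G w' = G w" using int_eq[of w' x] w by auto
    then show "w' = w" using G_eq_iff[of w' w] w by auto
  qed
  finally show ?thesis using w by auto
qed

lemma vf_unique: assumes "x > 1" "t \<ge> 0" "1 < w" "G w = G x - t" shows "vf x t = w"
  using vf_char[OF assms(1,2)] assms G_eq_iff[of w "vf x t"] by auto

lemma vf_0: "x \<ge> 1 \<Longrightarrow> vf x 0 = x"
  using vf_unique[of x 0 x] by (cases "x = 1") (auto simp: vf_def)

lemma vf_mono: assumes "t \<ge> 0" shows "mono (\<lambda>x. vf x t)"
proof (rule monoI)
  fix x y :: real assume "x \<le> y"
  show "vf x t \<le> vf y t"
  proof (cases "x \<le> 1")
    case True then show ?thesis using vf_char[of y t] assms by (cases "y \<le> 1") (auto simp: vf_def)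
  next
    case False
    then have "x > 1" "y > 1" using \<open>x \<le> y\<close> by auto
    have "G x \<le> G y" using G_le_iff \<open>x > 1\<close> \<open>y > 1\<close> \<open>x \<le> y\<close> by auto
    then show ?thesis using vf_char[OF \<open>x > 1\<close> assms] vf_char[OF \<open>y > 1\<close> assms]
      G_le_iff[of "vf x t" "vf y t"] by auto
  qed
qed


lemma G_le_bound: assumes "1 < y" "y \<le> z" shows "G y \<le> G z"
  using G_le_iff[of y z] assms by auto

lemma part_ii:
  assumes c: "c > 1" and hint: "h integrable_on {c..}" and t: "t > 0"
  shows "(\<exists>!w. 1 < w \<and> h integrable_on {w..} \<and> integral {w..} h = t)
     \<and> ((\<lambda>x. vf x t) \<longlongrightarrow> (THE w. 1 < w \<and> h integrable_on {w..} \<and> integral {w..} h = t)) at_top"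
proof -
  define I where "I = integral {c..} h"
  have bnd: "G y \<le> G c + I" if "y \<ge> c" for y
  proof -
    have "integral {c..y} h \<le> I" unfolding I_def
      using c that h_pos by (intro integral_subset_le int_h hint) (auto intro: less_imp_le)
    then show ?thesis using int_eq[of c y] c that by auto
  qed
  define Ginf where "Ginf = Sup (G ` {c..})"
  have bdd: "bdd_above (G ` {c..})" using bnd by (auto intro!: bdd_aboveI)
  have G_le_Ginf: "G y \<le> Ginf" if "y > 1" for y
  proof (cases "y \<ge> c")
    case True then show ?thesis unfolding Ginf_def using bdd by (intro cSup_upper) auto
  next
    case False
    then have "G y \<le> G c" using that by (intro G_le_bound) auto
    also have "\<dots> \<le> Ginf" unfolding Ginf_def using bdd by (intro cSup_upper) auto
    finally show ?thesis .
  qed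
  have G_less_Ginf: "G y < Ginf" if "y > 1" for y
    using G_less[of y "y+1"] G_le_Ginf[of "y+1"] that by auto
  have ev_above: "eventually (\<lambda>x. G x > z) at_top" if "z < Ginf" for z
  proof -
    obtain x0 where x0: "x0 \<in> {c..}" "z < G x0"
      using \<open>z < Ginf\<close> unfolding Ginf_def by (subst (asm) less_cSup_iff) (use bdd in auto)
    show ?thesis
      using eventually_ge_at_top[of x0]
    proof eventually_elim
      case (elim x) then show ?case using x0 c G_le_bound[of x0 x] by auto
    qed
  qed
  have Glim: "(G \<longlongrightarrow> Ginf) at_top"
  proof (rule order_tendstoI)
    fix z assume "z < Ginf" then show "eventually (\<lambda>x. G x > z) at_top" by (rule ev_above)
  next
    fix z assume "z > Ginf"
    show "eventually (\<lambda>x. G x < z) at_top"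
      using eventually_gt_at_top[of 1]
    proof eventually_elim
      case (elim x) then show ?case using G_le_Ginf[of x] \<open>z > Ginf\<close> by auto
    qed
  qed
  have hi: "(h has_integral (Ginf - G w)) {w..}" if "w > 1" for w
  proof (rule has_integral_to_inf)
    show "h integrable_on {w..y}" for y using that by (rule int_h)
    show "h y \<ge> 0" if "y \<ge> w" for y using h_pos[of y] that \<open>w > 1\<close> by auto
    have "eventually (\<lambda>y. integral {w..y} h = G y - G w) at_top"
      using eventually_ge_at_top[of w] by eventually_elim (use that int_eq in auto)
    moreover have "((\<lambda>y. G y - G w) \<longlongrightarrow> Ginf - G w) at_top"
      by (intro tendsto_intros Glim)
    ultimately show "((\<lambda>y. integral {w..y} h) \<longlongrightarrow> Ginf - G w) at_top"
      by (subst tendsto_cong) auto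
  qed
  have P_iff: "(1 < w \<and> h integrable_on {w..} \<and> integral {w..} h = t) \<longleftrightarrow> (1 < w \<and> G w = Ginf - t)" for w
    using hi[of w] by (auto simp: integral_unique has_integral_integrable)
  obtain y0 where y0: "y0 > 1" "G y0 < Ginf - t" using G_unbounded_below[of "Ginf - t"] by blast
  obtain y1 where y1: "y1 > 1" "G y1 > Ginf - t"
  proof -
    have "eventually (\<lambda>x. G x > Ginf - t \<and> x > 1) at_top"
      using ev_above[of "Ginf - t"] eventually_gt_at_top[of 1] t by (auto intro: eventually_conj)
    then obtain N where "\<forall>x\<ge>N. G x > Ginf - t \<and> x > 1" by (auto simp: eventually_at_top_linorder)
    then show ?thesis using that by blast
  qed
  have "y0 < y1" using y0 y1 G_le_iff[of y1 y0] by auto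
  then obtain ws where ws: "ws \<ge> y0" "ws \<le> y1" "G ws = Ginf - t"
  proof -
    have "\<forall>x. y0 \<le> x \<and> x \<le> y1 \<longrightarrow> isCont G x" using y0 by (auto intro!: isCont_G)
    then have "\<exists>x\<ge>y0. x \<le> y1 \<and> G x = Ginf - t"
      using y0 y1 \<open>y0 < y1\<close> by (intro IVT) auto
    then show ?thesis using that by blast
  qed
  have ws1: "ws > 1" using ws y0 by auto
  have the_eq: "(THE w. 1 < w \<and> h integrable_on {w..} \<and> integral {w..} h = t) = ws"
    unfolding P_iff using ws ws1 G_eq_iff[of _ ws] by (intro the_equality) auto
  have ex1: "\<exists>!w. 1 < w \<and> h integrable_on {w..} \<and> integral {w..} h = t"
    unfolding P_iff by (rule ex1I[of _ ws]) (use ws ws1 G_eq_iff[of _ ws] in auto)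
  have lim: "((\<lambda>x. vf x t) \<longlongrightarrow> ws) at_top"
  proof (rule tendstoI)
    fix e :: real assume "e > 0"
    define d where "d = min e ((ws - 1) / 2)"
    have d: "d > 0" "d \<le> e" "ws - d > 1" using \<open>e > 0\<close> ws1 by (auto simp: d_def min_def field_simps)
    have "G (ws - d) < G ws" using d by (intro G_less) auto
    then have "eventually (\<lambda>x. G x > G (ws - d) + t \<and> x > 1) at_top"
      using ev_above[of "G (ws - d) + t"] eventually_gt_at_top[of 1] ws by (auto intro: eventually_conj)
    then show "eventually (\<lambda>x. dist (vf x t) ws < e) at_top"
    proof eventually_elim
      case (elim x)
      then have x: "x > 1" "G x > G (ws - d) + t" by auto
      have v: "1 < vf x t" "G (vf x t) = G x - t" using vf_char[of x t] x t by auto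
      have "G (vf x t) < G (ws + d)"
        using v G_less_Ginf[OF x(1)] ws G_less[of ws "ws + d"] d ws1 by auto
      then have "vf x t < ws + d" using G_le_iff[of "ws + d" "vf x t"] v ws1 d by auto
      moreover have "G (ws - d) < G (vf x t)" using v x by auto
      then have "ws - d < vf x t" using G_le_iff[of "vf x t" "ws - d"] v d by auto
      ultimately show ?case using d by (auto simp: dist_real_def)
    qed
  qed
  show ?thesis using ex1 lim the_eq by simp
qed


lemma V_to_inf:
  assumes Ginf: "filterlim G at_top at_top" and t: "t \<ge> 0"
  shows "filterlim (\<lambda>x. vf x t) at_top at_top"
proof (rule filterlim_at_top_ge[where c=2, THEN iffD2], intro allI impI)
  fix M :: real assume M: "M \<ge> 2"
  have "eventually (\<lambda>x. G x \<ge> G M + t) at_top"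
    using Ginf by (auto simp: filterlim_at_top)
  moreover have "eventually (\<lambda>x::real. x > 1) at_top" by (rule eventually_gt_at_top)
  ultimately show "eventually (\<lambda>x. vf x t \<ge> M) at_top"
  proof eventually_elim
    case (elim x)
    then have "1 < vf x t" "G (vf x t) \<ge> G M" using vf_char[of x t] t by auto
    then show ?case using G_le_iff[of M "vf x t"] M by auto
  qed
qed

lemma G_to_inf_lin:
  assumes "X > 1" "K > 0" "\<And>y. y \<ge> X \<Longrightarrow> g y \<le> K * y"
  shows "filterlim G at_top at_top"
proof -
  have ge: "G x \<ge> G X - ln X / K + ln x / K" if "x \<ge> X" for x
  proof -
    have "G X - ln X / K \<le> G x - ln x / K"
    proof (rule mono_by_deriv[where f="\<lambda>y. G y - ln y / K" and f'="\<lambda>y. h y - 1 / (K * y)"])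
      fix y assume y: "X \<le> y" "y \<le> x"
      show "((\<lambda>y. G y - ln y / K) has_real_derivative h y - 1 / (K * y)) (at y)"
        using y assms by (auto intro!: derivative_eq_intros G_deriv simp: divide_simps)
      have "g y \<le> K * y" using y assms by auto
      moreover have "g y > 0" using y assms by (intro g_pos) auto
      ultimately show "h y - 1 / (K * y) \<ge> 0" unfolding h_def by (simp add: frac_le)
    qed (use that in auto)
    then show ?thesis by simp
  qed
  have "filterlim (\<lambda>x. (1 / K) * ln x) at_top at_top"
    using assms(2) by (intro filterlim_tendsto_pos_mult_at_top[OF tendsto_const] ln_at_top) auto
  then have "filterlim (\<lambda>x. G X - ln X / K + ln x / K) at_top at_top"
    by (intro filterlim_tendsto_add_at_top[OF tendsto_const]) auto
  then show ?thesis
  proof (rule filterlim_at_top_mono)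
    show "eventually (\<lambda>x. G X - ln X / K + ln x / K \<le> G x) at_top"
      using eventually_ge_at_top[of X] by eventually_elim (rule ge)
  qed
qed

lemma part_i:
  assumes lim: "((\<lambda>x. g x / x) \<longlongrightarrow> \<mu>) at_top" and mu: "\<mu> > 0" and t: "t \<ge> 0"
  shows "(\<lambda>x. vf x t) \<sim>[at_top] (\<lambda>x. x * exp (- \<mu> * t))"
proof -
  have bound: "\<exists>X>1. \<forall>y\<ge>X. \<bar>g y / y - \<mu>\<bar> \<le> e" if "e > 0" for e
  proof -
    have "eventually (\<lambda>y. \<bar>g y / y - \<mu>\<bar> < e) at_top"
      using lim that by (auto simp: tendsto_iff dist_real_def)
    then obtain N where "\<forall>y\<ge>N. \<bar>g y / y - \<mu>\<bar> < e" by (auto simp: eventually_at_top_linorder)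
    then show ?thesis by (intro exI[of _ "max N 2"]) auto
  qed
  obtain X1 where X1: "X1 > 1" "\<forall>y\<ge>X1. \<bar>g y / y - \<mu>\<bar> \<le> 1" using bound[of 1] by auto
  have "filterlim G at_top at_top"
  proof (rule G_to_inf_lin[of X1 "\<mu> + 1"])
    fix y assume "y \<ge> X1"
    then have "g y / y \<le> \<mu> + 1" "y > 0" using X1 by auto
    then show "g y \<le> (\<mu> + 1) * y" by (simp add: divide_le_eq)
  qed (use X1 mu in auto)
  then have Vinf: "filterlim (\<lambda>x. vf x t) at_top at_top" using t by (rule V_to_inf)
  have key: "eventually (\<lambda>x. \<bar>(ln (vf x t) - ln x) + \<mu> * t\<bar> \<le> e * t) at_top"
    if e: "e > 0" "e < \<mu>" for e
  proof -
    obtain X where X: "X > 1" "\<forall>y\<ge>X. \<bar>g y / y - \<mu>\<bar> \<le> e" using bound[OF e(1)] by auto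
    have gy: "(\<mu> - e) * y \<le> g y \<and> g y \<le> (\<mu> + e) * y" if "y \<ge> X" for y
    proof -
      have "y > 0" using that X by auto
      then show ?thesis using X(2) that by (auto simp: abs_le_iff field_simps)
    qed
    have "eventually (\<lambda>x. vf x t \<ge> X) at_top" using Vinf by (auto simp: filterlim_at_top)
    moreover have "eventually (\<lambda>x::real. x > 1) at_top" by (rule eventually_gt_at_top)
    ultimately show ?thesis
    proof eventually_elim
      case (elim x)
      have v: "1 < vf x t" "vf x t \<le> x" "G (vf x t) = G x - t" using vf_char[of x t] elim t by auto
      define v where "v = vf x t"
      have vX: "X \<le> v" using elim by (simp add: v_def)
      have up: "ln x - (\<mu> + e) * G x \<le> ln v - (\<mu> + e) * G v"
      proof -
        have "- (ln v - (\<mu> + e) * G v) \<le> - (ln x - (\<mu> + e) * G x)"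
        proof (rule mono_by_deriv[where f="\<lambda>y. - (ln y - (\<mu> + e) * G y)" and f'="\<lambda>y. (\<mu> + e) * h y - 1 / y"])
          fix y assume y: "v \<le> y" "y \<le> x"
          then have y1: "y > 1" "y \<ge> X" using v vX by (auto simp: v_def)
          show "((\<lambda>y. - (ln y - (\<mu> + e) * G y)) has_real_derivative (\<mu> + e) * h y - 1 / y) (at y)"
            using y1 by (auto intro!: derivative_eq_intros G_deriv simp: divide_simps)
          have "g y \<le> (\<mu> + e) * y" "g y > 0" using gy[of y] y1 g_pos by auto
          then show "(\<mu> + e) * h y - 1 / y \<ge> 0" using y1 unfolding h_def by (simp add: field_simps)
        qed (use v in \<open>auto simp: v_def\<close>)
        then show ?thesis by simp
      qed
      have lo: "ln v - (\<mu> - e) * G v \<le> ln x - (\<mu> - e) * G x"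
      proof (rule mono_by_deriv[where f="\<lambda>y. ln y - (\<mu> - e) * G y" and f'="\<lambda>y. 1 / y - (\<mu> - e) * h y"])
        fix y assume y: "v \<le> y" "y \<le> x"
        then have y1: "y > 1" "y \<ge> X" using v vX by (auto simp: v_def)
        show "((\<lambda>y. ln y - (\<mu> - e) * G y) has_real_derivative 1 / y - (\<mu> - e) * h y) (at y)"
          using y1 by (auto intro!: derivative_eq_intros G_deriv simp: divide_simps)
        have "(\<mu> - e) * y \<le> g y" "g y > 0" using gy[of y] y1 g_pos by auto
        then show "1 / y - (\<mu> - e) * h y \<ge> 0" using y1 unfolding h_def by (simp add: field_simps)
      qed (use v in \<open>auto simp: v_def\<close>)
      have "G x - G v = t" using v by (simp add: v_def)
      then have "ln x - ln v \<le> (\<mu> + e) * t" "ln x - ln v \<ge> (\<mu> - e) * t"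
        using up lo by (auto simp: algebra_simps)
      then show ?case by (auto simp: v_def abs_le_iff algebra_simps)
    qed
  qed
  have lnlim: "((\<lambda>x. ln (vf x t) - ln x) \<longlongrightarrow> - \<mu> * t) at_top"
  proof (rule tendstoI)
    fix e :: real assume "e > 0"
    define d where "d = min (\<mu> / 2) (e / (t + 1))"
    have "e / (t + 1) > 0" using \<open>e > 0\<close> t by simp
    then have d: "d > 0" "d < \<mu>" using mu unfolding d_def by auto
    have "d * t < e"
    proof -
      have "d * t \<le> e / (t + 1) * t" using t by (intro mult_right_mono) (auto simp: d_def)
      also have "\<dots> < e" using t \<open>e > 0\<close> by (simp add: field_simps)
      finally show ?thesis .
    qed
    note dt = this
    show "eventually (\<lambda>x. dist (ln (vf x t) - ln x) (- \<mu> * t) < e) at_top"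
      using key[OF d]
    proof eventually_elim
      case (elim x) then show ?case using dt by (auto simp: dist_real_def)
    qed
  qed
  have "((\<lambda>x. exp (ln (vf x t) - ln x) / exp (- \<mu> * t)) \<longlongrightarrow> exp (- \<mu> * t) / exp (- \<mu> * t)) at_top"
    by (intro tendsto_intros lnlim) auto
  moreover have "eventually (\<lambda>x. exp (ln (vf x t) - ln x) / exp (- \<mu> * t) = vf x t / (x * exp (- \<mu> * t))) at_top"
    using eventually_gt_at_top[of 1]
  proof eventually_elim
    case (elim x)
    then have "vf x t > 0" using vf_char[of x t] t by auto
    then show ?case using elim by (simp add: exp_diff)
  qed
  ultimately have "((\<lambda>x. vf x t / (x * exp (- \<mu> * t))) \<longlongrightarrow> 1) at_top"
    by (simp add: tendsto_cong)
  then show ?thesis by (rule asymp_equivI')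
qed

end


locale gfun2 = gfun +
  fixes g2 :: "real \<Rightarrow> real" and k :: real
  assumes g1_deriv: "\<And>x. x > 2 \<Longrightarrow> (g1 has_real_derivative g2 x) (at x)"
  and klim: "((\<lambda>x. x * g2 x) \<longlongrightarrow> k) at_top"
begin

definition psi where "psi x = x * g1 x - g x"

lemma psi_deriv: "x > 2 \<Longrightarrow> (psi has_real_derivative x * g2 x) (at x)"
  unfolding psi_def by (auto intro!: derivative_eq_intros g_deriv g1_deriv)

lemma psi_lim: "((\<lambda>x. psi x / x) \<longlongrightarrow> k) at_top"
proof (rule tendstoI)
  fix e :: real assume e: "e > 0"
  have "eventually (\<lambda>y. dist (y * g2 y) k < e / 2) at_top" using klim e by (intro tendstoD) auto
  then obtain N where N: "\<forall>y\<ge>N. \<bar>y * g2 y - k\<bar> < e / 2" by (auto simp: eventually_at_top_linorder dist_real_def)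
  define X where "X = max N 3"
  define A where "A = \<bar>psi X - k * X\<bar>"
  have bnd: "\<bar>psi x - k * x\<bar> \<le> e / 2 * x + A" if "x \<ge> X" for x
  proof -
    have "\<bar>(psi x - k * x) - (psi X - k * X)\<bar> \<le> e / 2 * (x - X)"
    proof (rule deriv_bound[where F="\<lambda>y. psi y - k * y" and F'="\<lambda>y. y * g2 y - k" and K="\<lambda>y. y" and K'="\<lambda>_. 1"])
      fix y assume y: "X \<le> y" "y \<le> x"
      then have "y > 2" "y \<ge> N" by (auto simp: X_def)
      then show "((\<lambda>y. psi y - k * y) has_real_derivative y * g2 y - k) (at y)"
        by (auto intro!: derivative_eq_intros psi_deriv)
      show "\<bar>y * g2 y - k\<bar> \<le> e / 2 * 1" using N \<open>y \<ge> N\<close> by force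
    qed (use that in \<open>auto intro!: derivative_eq_intros\<close>)
    moreover have "e / 2 * (x - X) \<le> e / 2 * x" using e X_def by auto
    ultimately show ?thesis unfolding A_def by linarith
  qed
  show "eventually (\<lambda>x. dist (psi x / x) k < e) at_top"
    using eventually_ge_at_top[of "max X (2 * (A + 1) / e)"]
  proof eventually_elim
    case (elim x)
    then have x: "x \<ge> X" "x \<ge> 2 * (A + 1) / e" by auto
    have xpos: "x > 0" using x by (auto simp: X_def)
    have "A < e / 2 * x" using x(2) e by (simp add: field_simps)
    then have "\<bar>psi x - k * x\<bar> < e * x" using bnd[OF x(1)] by linarith
    note lt = this
    have eq: "psi x / x - k = (psi x - k * x) / x" using xpos by (simp add: diff_divide_distrib)
    have "\<bar>psi x / x - k\<bar> = \<bar>psi x - k * x\<bar> / x" unfolding eq using xpos by (simp add: abs_divide)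
    also have "\<dots> < e" using lt xpos by (simp add: pos_divide_less_eq)
    finally have "\<bar>psi x / x - k\<bar> < e" .
    then show ?case by (simp add: dist_real_def)
  qed
qed

lemma psi_bound: assumes "e > 0" shows "\<exists>X>2. \<forall>y\<ge>X. \<bar>psi y / y - k\<bar> \<le> e"
proof -
  have "eventually (\<lambda>y. dist (psi y / y) k < e) at_top" using psi_lim assms by (auto simp: tendsto_iff)
  then obtain N where "\<forall>y\<ge>N. \<bar>psi y / y - k\<bar> < e" by (auto simp: eventually_at_top_linorder dist_real_def)
  then show ?thesis by (intro exI[of _ "max N 3"]) auto
qed

definition D :: "real \<Rightarrow> real \<Rightarrow> real" where "D c y = ln (g y) - ln y - c * G y"

lemma D_deriv: "y > 2 \<Longrightarrow> (D c has_real_derivative (psi y / y - c) / g y) (at y)"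
proof -
  assume y: "y > 2"
  then have gy: "g y > 0" by (intro g_pos) auto
  have "(D c has_real_derivative g1 y / g y - 1 / y - c * h y) (at y)"
    unfolding D_def using y gy by (auto intro!: derivative_eq_intros g_deriv G_deriv)
  moreover have "g1 y / g y - 1 / y - c * h y = (psi y / y - c) / g y"
    using y gy by (simp add: psi_def h_def field_simps)
  ultimately show ?thesis by simp
qed

lemma D_bound:
  assumes e: "e > 0" and X: "X > 2" "\<forall>y\<ge>X. \<bar>psi y / y - k\<bar> \<le> e" and ab: "X \<le> a" "a \<le> b"
  shows "\<bar>D k b - D k a\<bar> \<le> e * (G b - G a)"
proof (rule deriv_bound[where F'="\<lambda>y. (psi y / y - k) / g y" and K'=h])
  fix y assume y: "a \<le> y" "y \<le> b"
  then have y2: "y > 2" "y \<ge> X" using X ab by auto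
  show "(D k has_real_derivative (psi y / y - k) / g y) (at y)" using y2(1) by (rule D_deriv)
  show "(G has_real_derivative h y) (at y)" using y2 by (intro G_deriv) auto
  have gy: "g y > 0" using y2 by (intro g_pos) auto
  have "\<bar>(psi y / y - k) / g y\<bar> = \<bar>psi y / y - k\<bar> / g y" using gy by (simp add: abs_divide)
  also have "\<dots> \<le> e / g y" using X y2 gy by (intro divide_right_mono) auto
  finally show "\<bar>(psi y / y - k) / g y\<bar> \<le> e * h y" by (simp add: h_def)
qed (use ab in auto)

lemma G_inf: "filterlim G at_top at_top"
proof (cases "\<forall>M. \<exists>x>1. G x > M")
  case True
  show ?thesis unfolding filterlim_at_top
  proof
    fix M
    obtain x where x: "x > 1" "G x > M" using True by blast
    show "eventually (\<lambda>y. G y \<ge> M) at_top"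
      using eventually_ge_at_top[of x]
    proof eventually_elim
      case (elim y) then show ?case using x G_le_bound[of x y] by auto
    qed
  qed
next
  case False
  then obtain M where "\<not> (\<exists>x>1. G x > M)" by blast
  then have M: "\<And>x. x > 1 \<Longrightarrow> G x \<le> M" by (metis not_less)
  obtain X where X: "X > 2" "\<forall>y\<ge>X. \<bar>psi y / y - k\<bar> \<le> 1" using psi_bound[of 1] by auto
  define B where "B = \<bar>D k X\<bar> + \<bar>k\<bar> * (\<bar>G X\<bar> + \<bar>M\<bar>) + (\<bar>G X\<bar> + \<bar>M\<bar>)"
  have "filterlim G at_top at_top"
  proof (rule G_to_inf_lin[of X "exp B"])
    fix y assume y: "y \<ge> X"
    have y1: "y > 1" "g y > 0" using y X g_pos by auto
    have "\<bar>D k y - D k X\<bar> \<le> 1 * (G y - G X)" by (rule D_bound) (use X y in auto)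
    moreover have "G X \<le> G y" "G y \<le> M" using y X M G_le_bound[of X y] by auto
    moreover have "\<bar>k * G y\<bar> \<le> \<bar>k\<bar> * (\<bar>G X\<bar> + \<bar>M\<bar>)"
      unfolding abs_mult using calculation(2,3) by (intro mult_left_mono) auto
    moreover have "G y \<le> \<bar>M\<bar>" "- G X \<le> \<bar>G X\<bar>" "D k X \<le> \<bar>D k X\<bar>" using calculation(3) by auto
    ultimately have "ln (g y) - ln y \<le> B"
      unfolding B_def by (simp add: D_def abs_le_iff)
    then have "ln (g y / y) \<le> B" using y1 by (simp add: ln_div)
    note lnB = this
    have "g y / y > 0" using y1 by simp
    then have "g y / y = exp (ln (g y / y))" by simp
    also have "\<dots> \<le> exp B" using lnB by simp
    finally have "g y / y \<le> exp B" .
    then show "g y \<le> exp B * y" using y1 by (simp add: divide_le_eq mult.commute)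
  qed (use X in auto)
  then show ?thesis .
qed


definition W :: "real \<Rightarrow> real" where "W s = (THE w. 1 < w \<and> G w = s)"

lemma W_G: "w > 1 \<Longrightarrow> W (G w) = w"
  unfolding W_def by (rule the_equality) (use G_eq_iff in auto)

lemma V_eq_W: assumes "x > 1" "t \<ge> 0" shows "vf x t = W (G x - t)"
  using vf_char[OF assms] W_G[of "vf x t"] by auto

lemma W_deriv: assumes w0: "w0 > 1" shows "(W has_real_derivative g w0) (at (G w0))"
proof -
  define d where "d = (w0 - 1) / 2"
  have d: "d > 0" "w0 - d > 1" using w0 by (auto simp: d_def field_simps)
  have cont: "isCont W (G w0)"
  proof (rule isCont_inverse_function[where f=G and g=W and x=w0, OF d(1)])
    fix z assume "\<bar>z - w0\<bar> \<le> d"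
    then have "z > 1" using d by auto
    then show "W (G z) = z" "isCont G z" by (auto intro: W_G isCont_G)
  qed
  have "(W has_real_derivative inverse (h w0)) (at (G w0))"
  proof (rule DERIV_inverse_function[where f=G and a="G (w0 - d)" and b="G (w0 + d)"])
    show "(G has_real_derivative h w0) (at (W (G w0)))" using W_G[OF w0] G_deriv[OF w0] by simp
    show "h w0 \<noteq> 0" using h_pos[OF w0] by simp
    show "G (w0 - d) < G w0" "G w0 < G (w0 + d)" using d by (auto intro!: G_less)
    show "isCont W (G w0)" by (rule cont)
    fix y assume y: "G (w0 - d) < y" "y < G (w0 + d)"
    have "\<forall>x. w0 - d \<le> x \<and> x \<le> w0 + d \<longrightarrow> isCont G x" using d by (auto intro!: isCont_G)
    then have "\<exists>x\<ge>w0 - d. x \<le> w0 + d \<and> G x = y" using y d by (intro IVT) auto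
    then obtain z where z: "z \<ge> w0 - d" "G z = y" by blast
    then have "z > 1" using d by auto
    then show "G (W y) = y" using z W_G[of z] by simp
  qed
  then show ?thesis using g_pos[OF w0] by (simp add: h_def)
qed

lemma V_deriv: assumes x: "x > 1" and t: "t \<ge> 0"
  shows "((\<lambda>x. vf x t) has_real_derivative g (vf x t) / g x) (at x)"
proof -
  have v: "1 < vf x t" "G (vf x t) = G x - t" using vf_char[OF x t] by auto
  have "(W has_real_derivative g (vf x t)) (at (G x - t))"
    using W_deriv[OF v(1)] v(2) by simp
  then have "((\<lambda>y. W (G y - t)) has_real_derivative g (vf x t) * h x) (at x)"
    by (rule DERIV_chain2) (auto intro!: derivative_eq_intros G_deriv x)
  then have "((\<lambda>y. W (G y - t)) has_real_derivative g (vf x t) / g x) (at x)"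
    by (simp add: h_def)
  then show ?thesis
    by (rule has_field_derivative_transform_within_open[where S="{1<..}"])
       (use x t V_eq_W in auto)
qed

lemma rho_lim: assumes t: "t \<ge> 0"
  shows "((\<lambda>x. (g (vf x t) / vf x t) / (g x / x)) \<longlongrightarrow> exp (- k * t)) at_top"
proof -
  have Vinf: "filterlim (\<lambda>x. vf x t) at_top at_top" using G_inf t by (rule V_to_inf)
  have lnlim: "((\<lambda>x. D k (vf x t) - D k x) \<longlongrightarrow> 0) at_top"
  proof (rule tendstoI)
    fix e :: real assume e: "e > 0"
    define e' where "e' = e / (t + 1)"
    have e': "e' > 0" "e' * t < e" using e t by (auto simp: e'_def field_simps)
    obtain X where X: "X > 2" "\<forall>y\<ge>X. \<bar>psi y / y - k\<bar> \<le> e'" using psi_bound[OF e'(1)] by auto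
    have "eventually (\<lambda>x. vf x t \<ge> X) at_top" using Vinf by (auto simp: filterlim_at_top)
    moreover have "eventually (\<lambda>x::real. x > 1) at_top" by (rule eventually_gt_at_top)
    ultimately show "eventually (\<lambda>x. dist (D k (vf x t) - D k x) 0 < e) at_top"
    proof eventually_elim
      case (elim x)
      have v: "vf x t \<le> x" "G (vf x t) = G x - t" using vf_char[of x t] elim t by auto
      have "\<bar>D k x - D k (vf x t)\<bar> \<le> e' * (G x - G (vf x t))"
        by (rule D_bound[OF e'(1) X]) (use elim v in auto)
      then have "\<bar>D k (vf x t) - D k x\<bar> \<le> e' * t" using v by (simp add: abs_minus_commute)
      then show ?case using e' by (simp add: dist_real_def)
    qed
  qed
  have "((\<lambda>x. exp (D k (vf x t) - D k x - k * t)) \<longlongrightarrow> exp (0 - k * t)) at_top"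
    by (intro tendsto_intros lnlim)
  moreover have "eventually (\<lambda>x. exp (D k (vf x t) - D k x - k * t) = (g (vf x t) / vf x t) / (g x / x)) at_top"
    using eventually_gt_at_top[of 1]
  proof eventually_elim
    case (elim x)
    have v: "1 < vf x t" "G (vf x t) = G x - t" using vf_char[of x t] elim t by auto
    have pos: "g (vf x t) > 0" "g x > 0" "vf x t > 0" "x > 0" using v elim g_pos by auto
    have "D k (vf x t) - D k x - k * t = ln ((g (vf x t) / vf x t) / (g x / x))"
      using pos v by (simp add: D_def ln_div ln_mult algebra_simps flip: distrib_left)
    then show ?case using pos by simp
  qed
  ultimately show ?thesis by (simp add: tendsto_cong)
qed

lemma part_iii: assumes t: "t \<ge> 0"
  shows "\<exists>L::real \<Rightarrow> real. (\<forall>x\<ge>1. 0 < L x) \<and> slowly_varying L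
            \<and> (\<forall>x\<ge>1. vf x t = x powr (exp (- k * t)) * L x)"
proof -
  define lam where "lam = exp (- k * t)"
  define L where "L x = vf x t / x powr lam" for x
  define E where "E x = ln (vf x t) - lam * ln x" for x
  have vpos: "vf x t > 0" if "x \<ge> 1" for x
    using vf_char[of x t] t that by (cases "x = 1") (auto simp: vf_def)
  have Lpos: "\<forall>x\<ge>1. 0 < L x" using vpos by (auto simp: L_def)
  have Leq: "\<forall>x\<ge>1. vf x t = x powr lam * L x" by (auto simp: L_def)
  have LE: "L x = exp (E x)" if "x \<ge> 1" for x
    using vpos[OF that] that by (simp add: L_def E_def powr_def exp_diff)
  have E_deriv: "(E has_real_derivative ((g (vf y t) / vf y t) / (g y / y) - lam) / y) (at y)" if "y > 1" for y
  proof -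
    have pos: "g (vf y t) > 0" "g y > 0" "vf y t > 0" using vf_char[of y t] that t g_pos by auto
    have "(E has_real_derivative (g (vf y t) / g y) / vf y t - lam * (1 / y)) (at y)"
      unfolding E_def using that pos by (auto intro!: derivative_eq_intros V_deriv t)
    moreover have "(g (vf y t) / g y) / vf y t - lam * (1 / y) = ((g (vf y t) / vf y t) / (g y / y) - lam) / y"
      using pos that by (simp add: field_simps)
    ultimately show ?thesis by simp
  qed
  have Ebound: "\<exists>X\<ge>1. \<forall>a b. X \<le> a \<longrightarrow> a \<le> b \<longrightarrow> \<bar>E b - E a\<bar> \<le> e * (ln b - ln a)" if e: "e > 0" for e
  proof -
    have "eventually (\<lambda>x. dist ((g (vf x t) / vf x t) / (g x / x)) lam < e) at_top"
      using rho_lim[OF t] e unfolding lam_def by (intro tendstoD) auto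
    then obtain N where N: "\<forall>x\<ge>N. \<bar>(g (vf x t) / vf x t) / (g x / x) - lam\<bar> < e"
      by (auto simp: eventually_at_top_linorder dist_real_def)
    define X where "X = max N 2"
    show ?thesis
    proof (intro exI[of _ X] conjI allI impI)
      show "1 \<le> X" by (simp add: X_def)
      fix a b :: real assume ab: "X \<le> a" "a \<le> b"
      show "\<bar>E b - E a\<bar> \<le> e * (ln b - ln a)"
      proof (rule deriv_bound[where F'="\<lambda>y. ((g (vf y t) / vf y t) / (g y / y) - lam) / y" and K'="\<lambda>y. 1 / y"])
        fix y assume y: "a \<le> y" "y \<le> b"
        then have y1: "y > 1" "y \<ge> N" using ab by (auto simp: X_def)
        show "(E has_real_derivative ((g (vf y t) / vf y t) / (g y / y) - lam) / y) (at y)"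
          using y1(1) by (rule E_deriv)
        show "(ln has_real_derivative 1 / y) (at y)" using y1 by (auto intro!: derivative_eq_intros)
        have "\<bar>((g (vf y t) / vf y t) / (g y / y) - lam) / y\<bar> = \<bar>(g (vf y t) / vf y t) / (g y / y) - lam\<bar> / y"
          using y1 by (simp add: abs_divide)
        also have "\<dots> \<le> e / y" using N y1 by (intro divide_right_mono) (auto intro: less_imp_le)
        finally show "\<bar>((g (vf y t) / vf y t) / (g y / y) - lam) / y\<bar> \<le> e * (1 / y)" by simp
      qed (use ab in auto)
    qed
  qed
  have Elim: "((\<lambda>x. E (c * x) - E x) \<longlongrightarrow> 0) at_top" if c: "c > 0" for c
  proof (rule tendstoI)
    fix e :: real assume e: "e > 0"
    define e' where "e' = e / (\<bar>ln c\<bar> + 1)"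
    have e': "e' > 0" "e' * \<bar>ln c\<bar> < e" using e by (auto simp: e'_def field_simps)
    obtain X where X: "X \<ge> 1" "\<forall>a b. X \<le> a \<longrightarrow> a \<le> b \<longrightarrow> \<bar>E b - E a\<bar> \<le> e' * (ln b - ln a)"
      using Ebound[OF e'(1)] by auto
    show "eventually (\<lambda>x. dist (E (c * x) - E x) 0 < e) at_top"
      using eventually_ge_at_top[of "X / min c 1"]
    proof eventually_elim
      case (elim x)
      have m: "min c 1 > 0" using c by auto
      have Xx: "X \<le> x * min c 1" using elim m by (simp add: field_simps)
      then have "x * min c 1 > 0" using X(1) by linarith
      then have "x > 0" using m by (simp add: zero_less_mult_iff)
      then have "x * min c 1 \<le> x" "x * min c 1 \<le> c * x"
        by (auto intro: mult_left_le simp: mult.commute[of c] intro!: mult_left_mono)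
      then have xX: "X \<le> x" "X \<le> c * x" using Xx by linarith+
      have xpos: "x > 0" using xX X by auto
      have "\<bar>E (c * x) - E x\<bar> \<le> e' * \<bar>ln c\<bar>"
      proof (cases "c \<ge> 1")
        case True
        then have "x \<le> c * x" using xpos by simp
        then have "\<bar>E (c * x) - E x\<bar> \<le> e' * (ln (c * x) - ln x)" using X xX by blast
        then show ?thesis using True xpos c by (simp add: ln_mult)
      next
        case False
        then have "c * x \<le> x" using xpos by simp
        then have "\<bar>E x - E (c * x)\<bar> \<le> e' * (ln x - ln (c * x))" using X xX by blast
        moreover have "ln c \<le> 0" using False c by simp
        ultimately show ?thesis using xpos c by (simp add: ln_mult abs_minus_commute)
      qed
      then show ?case using e' by (simp add: dist_real_def)
    qed
  qed
  have sv: "slowly_varying L"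
    unfolding slowly_varying_def
  proof (intro conjI allI impI)
    have "(\<lambda>x. vf x t) \<in> borel_measurable borel" using vf_mono[OF t] by (rule borel_measurable_mono)
    then have "L \<in> borel_measurable borel" unfolding L_def by measurable
    then show "L \<in> borel_measurable (restrict_space borel {1..})"
      by (rule measurable_restrict_space1)
    fix c :: real assume c: "c > 0"
    have "((\<lambda>x. exp (E (c * x) - E x)) \<longlongrightarrow> exp 0) at_top" by (intro tendsto_intros Elim c)
    moreover have "eventually (\<lambda>x. exp (E (c * x) - E x) = L (c * x) / L x) at_top"
      using eventually_ge_at_top[of "1 / min c 1"]
    proof eventually_elim
      case (elim x)
      have m: "min c 1 > 0" using c by auto
      have Xx: "1 \<le> x * min c 1" using elim m by (simp add: field_simps)
      then have "x * min c 1 > 0" by linarith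
      then have "x > 0" using m by (simp add: zero_less_mult_iff)
      then have "x * min c 1 \<le> x" "x * min c 1 \<le> c * x"
        by (auto intro: mult_left_le simp: mult.commute[of c] intro!: mult_left_mono)
      then have "1 \<le> x" "1 \<le> c * x" using Xx by linarith+
      then show ?case using LE by (simp add: exp_diff)
    qed
    ultimately show "((\<lambda>x. L (c * x) / L x) \<longlongrightarrow> 1) at_top" by (simp add: tendsto_cong)
  qed
  show ?thesis using Lpos sv Leq unfolding lam_def by blast
qed

end


definition f0 :: "real \<Rightarrow> real \<Rightarrow> real" where
  "f0 x s = (if x = 0 then 1 else (1 - s) powr x) - 1 + x * s"
definition f1 :: "real \<Rightarrow> real \<Rightarrow> real" where
  "f1 x s = ln (1 - s) * (1 - s) powr x + s"
definition f2 :: "real \<Rightarrow> real \<Rightarrow> real" where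
  "f2 x s = (ln (1 - s))^2 * (1 - s) powr x"

lemma f0_deriv: assumes s: "0 \<le> s" "s \<le> 1" and y: "y > 0"
  shows "((\<lambda>x. f0 x s) has_real_derivative f1 y s) (at y)"
proof (cases "s = 1")
  case True
  have "f1 y s = 1" using True y by (simp add: f1_def)
  moreover have "((\<lambda>x. x - 1) has_real_derivative 1) (at y)" by (auto intro!: derivative_eq_intros)
  ultimately have "((\<lambda>x. x - 1) has_real_derivative f1 y s) (at y)" by simp
  then show ?thesis
    by (rule has_field_derivative_transform_within_open[where S="{0<..}"])
       (use y True in \<open>auto simp: f0_def f1_def\<close>)
next
  case False
  then have c: "1 - s > 0" using s by auto
  have "((\<lambda>x. (1 - s) powr x - 1 + x * s) has_real_derivative ln (1 - s) * (1 - s) powr y + s) (at y)"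
    using c by (auto intro!: derivative_eq_intros simp: powr_def)
  then show ?thesis unfolding f1_def
    by (rule has_field_derivative_transform_within_open[where S="{0<..}"])
       (use y in \<open>auto simp: f0_def\<close>)
qed

lemma f1_deriv: assumes s: "0 \<le> s" "s \<le> 1" and y: "y > 0"
  shows "((\<lambda>x. f1 x s) has_real_derivative f2 y s) (at y)"
proof (cases "s = 1")
  case True
  have "f2 y s = 0" using True y by (simp add: f2_def)
  moreover have "((\<lambda>x. 1) has_real_derivative 0) (at y)" by (auto intro!: derivative_eq_intros)
  ultimately have "((\<lambda>x. 1) has_real_derivative f2 y s) (at y)" by simp
  then show ?thesis
    by (rule has_field_derivative_transform_within_open[where S="{0<..}"])
       (use y True in \<open>auto simp: f1_def f2_def\<close>)
next
  case False
  then have c: "1 - s > 0" using s by auto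
  show ?thesis unfolding f1_def f2_def
    using c by (auto intro!: derivative_eq_intros simp: powr_def power2_eq_square)
qed

lemma bernoulli_powr: fixes c y :: real assumes c: "0 < c" "c \<le> 1" and y: "y \<ge> 1"
  shows "c powr y \<ge> 1 - y * (1 - c)"
proof -
  have "1 powr y - y * 1 \<le> c powr y - y * c"
  proof -
    have "- (c powr y - y * c) \<le> - (1 powr y - y * 1)"
    proof (rule mono_by_deriv[where f="\<lambda>z. - (z powr y - y * z)" and f'="\<lambda>z. y - y * z powr (y - 1)"])
      fix z assume z: "c \<le> z" "z \<le> 1"
      then have zp: "z > 0" using c by auto
      show "((\<lambda>z. - (z powr y - y * z)) has_real_derivative y - y * z powr (y - 1)) (at z)"
        using zp by (auto intro!: derivative_eq_intros simp: algebra_simps)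
      have "z powr (y - 1) \<le> 1" using z zp y by (intro powr_le1) auto
      then show "y - y * z powr (y - 1) \<ge> 0" using y by (simp add: mult_left_le)
    qed (use c in auto)
    then show ?thesis by simp
  qed
  then show ?thesis by (simp add: algebra_simps)
qed

lemma f1_bounds: assumes s: "0 \<le> s" "s \<le> 1" and y: "y \<ge> 1"
  shows "0 \<le> f1 y s" "f1 y s \<le> y * s^2"
proof -
  have "0 \<le> f1 y s \<and> f1 y s \<le> y * s^2"
  proof (cases "s = 1")
    case True then show ?thesis using y by (simp add: f1_def)
  next
    case False
    define c where "c = 1 - s"
    have c: "0 < c" "c \<le> 1" using s False by (auto simp: c_def)
    have lnc: "ln c \<le> 0" using c by simp
    have lnc2: "ln c \<le> - s" using ln_le_minus_one[OF c(1)] by (simp add: c_def)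
    have lnc3: "c * ln c \<ge> - s"
    proof -
      have "ln (1 / c) \<le> 1 / c - 1" using c by (intro ln_le_minus_one) auto
      then have "- ln c \<le> 1 / c - 1" using c by (simp add: ln_div)
      then have "c * (- ln c) \<le> c * (1 / c - 1)" using c by (intro mult_left_mono) auto
      then show ?thesis using c by (simp add: algebra_simps c_def)
    qed
    have cy: "c powr y \<le> c" using powr_mono'[of 1 y c] c y by simp
    have cy0: "c powr y \<ge> 0" by simp
    have "ln c * c powr y \<ge> ln c * c" using cy lnc by (intro mult_left_mono_neg) auto
    then have low: "0 \<le> f1 y s" using lnc3 by (simp add: f1_def c_def[symmetric] algebra_simps)
    have "ln c * c powr y \<le> - s * c powr y" using lnc2 cy0 by (intro mult_right_mono) auto
    moreover have "c powr y \<ge> 1 - y * s" using bernoulli_powr[OF c y] by (simp add: c_def)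
    then have "- s * c powr y \<le> - s * (1 - y * s)" using s by (intro mult_left_mono_neg) auto
    ultimately have "f1 y s \<le> y * s^2" by (simp add: f1_def c_def[symmetric] algebra_simps power2_eq_square)
    then show ?thesis using low by auto
  qed
  then show "0 \<le> f1 y s" "f1 y s \<le> y * s^2" by auto
qed

lemma f1_pos: assumes s: "0 < s" "s \<le> 1" and y: "y > 1" shows "0 < f1 y s"
proof (cases "s = 1")
  case True then show ?thesis by (simp add: f1_def)
next
  case False
  define c where "c = 1 - s"
  have c: "0 < c" "c < 1" using s False by (auto simp: c_def)
  have lnc: "ln c < 0" using c by simp
  have lnc3: "c * ln c \<ge> - s"
  proof -
    have "ln (1 / c) \<le> 1 / c - 1" using c by (intro ln_le_minus_one) auto
    then have "- ln c \<le> 1 / c - 1" using c by (simp add: ln_div)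
    then have "c * (- ln c) \<le> c * (1 / c - 1)" using c by (intro mult_left_mono) auto
    then show ?thesis using c by (simp add: algebra_simps c_def)
  qed
  have cy: "c powr y < c powr 1" using c y by (intro powr_less_mono') auto
  then have "ln c * c powr y > ln c * c" using lnc c by (intro mult_strict_left_mono_neg) auto
  then show ?thesis using lnc3 by (simp add: f1_def c_def[symmetric] algebra_simps)
qed

lemma f2_bounds: assumes s: "0 \<le> s" "s \<le> 1" and y: "y \<ge> 2"
  shows "0 \<le> f2 y s" "f2 y s \<le> s^2"
proof -
  show "0 \<le> f2 y s" by (simp add: f2_def)
  show "f2 y s \<le> s^2"
  proof (cases "s = 1")
    case True then show ?thesis using y by (simp add: f2_def)
  next
    case False
    define c where "c = 1 - s"
    have c: "0 < c" "c \<le> 1" using s False by (auto simp: c_def)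
    have l1: "- ln c \<le> s / c"
    proof -
      have "ln (1 / c) \<le> 1 / c - 1" using c by (intro ln_le_minus_one) auto
      then show ?thesis using c by (simp add: ln_div c_def field_simps)
    qed
    have l0: "0 \<le> - ln c" using c by simp
    have "(ln c)^2 \<le> (s / c)^2" using l1 l0 power_mono[OF l1 l0, of 2] by simp
    moreover have "c powr y \<le> c powr 2" using powr_mono'[of 2 y c] c y by simp
    then have "c powr y \<le> c^2" using c by (simp add: powr_realpow)
    ultimately have "(ln c)^2 * c powr y \<le> (s / c)^2 * c^2"
      by (intro mult_mono) auto
    also have "\<dots> = s^2" using c by (simp add: field_simps)
    finally show ?thesis by (simp add: f2_def c_def)
  qed
qed

lemma f0_1: "s \<le> 1 \<Longrightarrow> f0 1 s = 0"
  by (cases "s = 1") (auto simp: f0_def)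

lemma f0_bounds: assumes s: "0 \<le> s" "s \<le> 1" and x: "x \<ge> 1"
  shows "0 \<le> f0 x s" "f0 x s \<le> (x^2 - 1) / 2 * s^2"
proof -
  show "0 \<le> f0 x s"
  proof -
    have "f0 1 s \<le> f0 x s"
      by (rule mono_by_deriv[where f'="\<lambda>y. f1 y s"]) (use x s in \<open>auto intro: f0_deriv f1_bounds\<close>)
    then show ?thesis using s by (simp add: f0_1)
  qed
  show "f0 x s \<le> (x^2 - 1) / 2 * s^2"
  proof -
    have "f0 x s - x^2 / 2 * s^2 \<le> f0 1 s - 1^2 / 2 * s^2"
    proof -
      have "- (f0 1 s - 1^2 / 2 * s^2) \<le> - (f0 x s - x^2 / 2 * s^2)"
      proof (rule mono_by_deriv[where f="\<lambda>y. - (f0 y s - y^2 / 2 * s^2)" and f'="\<lambda>y. y * s^2 - f1 y s"])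
        fix y assume y: "1 \<le> y" "y \<le> x"
        show "((\<lambda>y. - (f0 y s - y^2 / 2 * s^2)) has_real_derivative y * s^2 - f1 y s) (at y)"
          using y s by (auto intro!: derivative_eq_intros f0_deriv simp: power2_eq_square)
        show "y * s^2 - f1 y s \<ge> 0" using f1_bounds(2)[OF s, of y] y by auto
      qed (use x in auto)
      then show ?thesis by simp
    qed
    then show ?thesis using s by (simp add: f0_1 field_simps)
  qed
qed


lemma f0_pos: assumes s: "0 < s" "s \<le> 1" and x: "x > 1" shows "0 < f0 x s"
proof -
  have "f0 ((1 + x) / 2) s < f0 x s"
  proof (rule DERIV_pos_imp_increasing[where f="\<lambda>x. f0 x s"])
    show "(1 + x) / 2 < x" using x by simp
    fix y assume y: "(1 + x) / 2 \<le> y" "y \<le> x"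
    then have "y > 1" using x by simp
    then show "\<exists>d. ((\<lambda>x. f0 x s) has_real_derivative d) (at y) \<and> d > 0"
      using s by (intro exI[of _ "f1 y s"]) (auto intro!: f0_deriv f1_pos)
  qed
  moreover have "0 \<le> f0 ((1 + x) / 2) s" using s x by (intro f0_bounds(1)) auto
  ultimately show ?thesis by simp
qed

definition F0 :: "real \<Rightarrow> (nat \<Rightarrow> real) \<Rightarrow> real" where "F0 x u = (\<Sum>i. f0 x (u i))"
definition F1 :: "real \<Rightarrow> (nat \<Rightarrow> real) \<Rightarrow> real" where "F1 x u = (\<Sum>i. f1 x (u i))"
definition F2 :: "real \<Rightarrow> (nat \<Rightarrow> real) \<Rightarrow> real" where "F2 x u = (\<Sum>i. f2 x (u i))"
definition sq :: "(nat \<Rightarrow> real) \<Rightarrow> real" where "sq u = (\<Sum>i. (u i)^2)"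

lemma Delta_D: assumes "u \<in> Delta"
  shows "\<And>i. 0 \<le> u i" "\<And>i. u i \<le> 1" "summable u" "summable (\<lambda>i. (u i)^2)" "suminf u \<le> 1"
proof -
  show nn: "\<And>i. 0 \<le> u i" and su: "summable u" and s1: "suminf u \<le> 1"
    using assms by (auto simp: Delta_def)
  show le1: "u i \<le> 1" for i
  proof -
    have "u i \<le> sum u {..<Suc i}" using nn by (simp add: sum_nonneg)
    also have "\<dots> \<le> suminf u" using su nn by (intro sum_le_suminf) auto
    finally show ?thesis using s1 by simp
  qed
  show "summable (\<lambda>i. (u i)^2)"
  proof (rule summable_comparison_test[OF _ su])
    show "\<exists>N. \<forall>n\<ge>N. norm ((u n)^2) \<le> u n"
      using nn le1 by (intro exI[of _ 0]) (auto simp: power2_eq_square mult_left_le)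
  qed
qed

lemma sq_pos: assumes "u \<in> Delta" "\<not> (\<forall>i. u i = 0)" shows "sq u > 0"
proof -
  obtain i where i: "u i \<noteq> 0" using assms by auto
  then have "(u i)^2 > 0" by simp
  then show ?thesis unfolding sq_def using Delta_D[OF assms(1)] by (intro suminf_pos2) auto
qed

lemma sq_nonneg: "u \<in> Delta \<Longrightarrow> sq u \<ge> 0"
  unfolding sq_def using Delta_D by (intro suminf_nonneg) auto

lemma F0_bounds: assumes u: "u \<in> Delta" and x: "x \<ge> 1"
  shows "summable (\<lambda>i. f0 x (u i))" "0 \<le> F0 x u" "F0 x u \<le> (x^2 - 1) / 2 * sq u"
proof -
  note D = Delta_D[OF u]
  show sm: "summable (\<lambda>i. f0 x (u i))"
  proof (rule summable_comparison_test[OF _ summable_mult[OF D(4), of "(x^2 - 1) / 2"]])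
    show "\<exists>N. \<forall>n\<ge>N. norm (f0 x (u n)) \<le> (x^2 - 1) / 2 * (u n)^2"
      using f0_bounds[OF D(1) D(2) x] by (intro exI[of _ 0]) auto
  qed
  show "0 \<le> F0 x u" unfolding F0_def using f0_bounds[OF D(1) D(2) x] by (intro suminf_nonneg sm) auto
  have "F0 x u \<le> (\<Sum>i. (x^2 - 1) / 2 * (u i)^2)" unfolding F0_def
    using f0_bounds[OF D(1) D(2) x] by (intro suminf_le sm summable_mult D(4)) auto
  also have "\<dots> = (x^2 - 1) / 2 * sq u" unfolding sq_def using D(4) by (rule suminf_mult)
  finally show "F0 x u \<le> (x^2 - 1) / 2 * sq u" .
qed

lemma F0_pos: assumes u: "u \<in> Delta" "\<not> (\<forall>i. u i = 0)" and x: "x > 1" shows "F0 x u > 0"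
proof -
  note D = Delta_D[OF u(1)]
  obtain i where i: "u i \<noteq> 0" using u by auto
  then have "u i > 0" using D(1)[of i] by auto
  then have "f0 x (u i) > 0" using D(2) x by (intro f0_pos) auto
  then show ?thesis unfolding F0_def
    using F0_bounds(1)[OF u(1)] f0_bounds(1)[OF D(1) D(2)] x by (intro suminf_pos2) auto
qed

lemma F1_bounds: assumes u: "u \<in> Delta" and y: "y \<ge> 1"
  shows "summable (\<lambda>i. f1 y (u i))" "\<bar>F1 y u\<bar> \<le> y * sq u"
proof -
  note D = Delta_D[OF u]
  show sm: "summable (\<lambda>i. f1 y (u i))"
  proof (rule summable_comparison_test[OF _ summable_mult[OF D(4), of y]])
    show "\<exists>N. \<forall>n\<ge>N. norm (f1 y (u n)) \<le> y * (u n)^2"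
      using f1_bounds[OF D(1) D(2) y] by (intro exI[of _ 0]) auto
  qed
  have "0 \<le> F1 y u" unfolding F1_def using f1_bounds[OF D(1) D(2) y] by (intro suminf_nonneg sm) auto
  moreover have "F1 y u \<le> (\<Sum>i. y * (u i)^2)" unfolding F1_def
    using f1_bounds[OF D(1) D(2) y] by (intro suminf_le sm summable_mult D(4)) auto
  moreover have "(\<Sum>i. y * (u i)^2) = y * sq u" unfolding sq_def using D(4) by (rule suminf_mult)
  ultimately show "\<bar>F1 y u\<bar> \<le> y * sq u" by simp
qed

lemma F2_bounds: assumes u: "u \<in> Delta" and y: "y \<ge> 2"
  shows "summable (\<lambda>i. f2 y (u i))" "\<bar>F2 y u\<bar> \<le> sq u"
proof -
  note D = Delta_D[OF u]
  show sm: "summable (\<lambda>i. f2 y (u i))"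
  proof (rule summable_comparison_test[OF _ D(4)])
    show "\<exists>N. \<forall>n\<ge>N. norm (f2 y (u n)) \<le> (u n)^2"
      using f2_bounds[OF D(1) D(2) y] by (intro exI[of _ 0]) auto
  qed
  have "0 \<le> F2 y u" unfolding F2_def using f2_bounds[OF D(1) D(2) y] by (intro suminf_nonneg sm) auto
  moreover have "F2 y u \<le> sq u" unfolding F2_def sq_def
    using f2_bounds[OF D(1) D(2) y] by (intro suminf_le sm D(4)) auto
  ultimately show "\<bar>F2 y u\<bar> \<le> sq u" by simp
qed

lemma F0_deriv: assumes u: "u \<in> Delta" and x0: "x0 > 1"
  shows "((\<lambda>x. F0 x u) has_real_derivative F1 x0 u) (at x0)"
proof -
  note D = Delta_D[OF u]
  define a where "a = (1 + x0) / 2"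
  define b where "b = x0 + 1"
  have ab: "1 < a" "a < x0" "x0 < b" using x0 by (auto simp: a_def b_def)
  have "((\<lambda>x. \<Sum>n. f0 x (u n)) has_field_derivative (\<Sum>n. f1 x0 (u n))) (at x0)"
  proof (rule has_field_derivative_series'(2)[where S="{a..b}" and x0=x0])
    show "convex {a..b}" by (rule convex_real_interval)
    show "((\<lambda>x. f0 x (u n)) has_field_derivative f1 x (u n)) (at x within {a..b})" if "x \<in> {a..b}" for n x
      using that ab D by (intro has_field_derivative_at_within[OF f0_deriv]) auto
    show "uniformly_convergent_on {a..b} (\<lambda>n x. \<Sum>i<n. f1 x (u i))"
    proof (rule Weierstrass_m_test'[where M="\<lambda>n. b * (u n)^2"])
      fix n x assume x: "x \<in> {a..b}"
      then have "x \<ge> 1" using ab by auto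
      then have "norm (f1 x (u n)) \<le> x * (u n)^2" using f1_bounds[OF D(1) D(2)] by auto
      also have "\<dots> \<le> b * (u n)^2" using x by (intro mult_right_mono) auto
      finally show "norm (f1 x (u n)) \<le> b * (u n)^2" .
    qed (intro summable_mult D(4))
    show "x0 \<in> {a..b}" using ab by auto
    show "summable (\<lambda>n. f0 x0 (u n))" using F0_bounds(1)[OF u] x0 by auto
    show "x0 \<in> interior {a..b}" using ab by auto
  qed
  then show ?thesis by (simp add: F0_def F1_def)
qed

lemma F1_deriv: assumes u: "u \<in> Delta" and x0: "x0 > 2"
  shows "((\<lambda>x. F1 x u) has_real_derivative F2 x0 u) (at x0)"
proof -
  note D = Delta_D[OF u]
  define a where "a = (2 + x0) / 2"
  define b where "b = x0 + 1"
  have ab: "2 < a" "a < x0" "x0 < b" using x0 by (auto simp: a_def b_def)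
  have "((\<lambda>x. \<Sum>n. f1 x (u n)) has_field_derivative (\<Sum>n. f2 x0 (u n))) (at x0)"
  proof (rule has_field_derivative_series'(2)[where S="{a..b}" and x0=x0])
    show "convex {a..b}" by (rule convex_real_interval)
    show "((\<lambda>x. f1 x (u n)) has_field_derivative f2 x (u n)) (at x within {a..b})" if "x \<in> {a..b}" for n x
      using that ab D by (intro has_field_derivative_at_within[OF f1_deriv]) auto
    show "uniformly_convergent_on {a..b} (\<lambda>n x. \<Sum>i<n. f2 x (u i))"
    proof (rule Weierstrass_m_test'[where M="\<lambda>n. (u n)^2"])
      fix n x assume x: "x \<in> {a..b}"
      then have "x \<ge> 2" using ab by auto
      then show "norm (f2 x (u n)) \<le> (u n)^2" using f2_bounds[OF D(1) D(2)] by auto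
    qed (rule D(4))
    show "x0 \<in> {a..b}" using ab by auto
    show "summable (\<lambda>n. f1 x0 (u n))" using F1_bounds(1)[OF u] x0 by auto
    show "x0 \<in> interior {a..b}" using ab by auto
  qed
  then show ?thesis by (simp add: F1_def F2_def)
qed

lemma F0_div_lim: assumes u: "u \<in> Delta"
  shows "((\<lambda>x. F0 x u / x) \<longlongrightarrow> suminf u) at_top"
proof -
  note D = Delta_D[OF u]
  have "((\<lambda>x. \<Sum>k. f0 x (u k) / x) \<longlongrightarrow> (\<Sum>k. u k)) at_top"
  proof (rule tannerys_theorem[where M=u, THEN conjunct2, THEN conjunct2])
    fix k
    show "((\<lambda>x. f0 x (u k) / x) \<longlongrightarrow> u k) at_top"
    proof -
      have inv0: "((\<lambda>x::real. 1 / x) \<longlongrightarrow> 0) at_top"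
        by (intro tendsto_divide_0[OF tendsto_const filterlim_at_top_imp_at_infinity[OF filterlim_ident]])
      have P: "((\<lambda>x. (1 - u k) powr x * (1 / x)) \<longlongrightarrow> 0) at_top"
        proof (rule Lim_null_comparison[where g="\<lambda>x. 1 / x"])
          show "eventually (\<lambda>x. norm ((1 - u k) powr x * (1 / x)) \<le> 1 / x) at_top"
            using eventually_gt_at_top[of 0]
          proof eventually_elim
            case (elim x)
            have "(1 - u k) powr x \<le> 1" using D(1)[of k] D(2)[of k] elim by (intro powr_le1) auto
            then show ?case using elim by (simp add: abs_mult divide_right_mono)
          qed
          show "((\<lambda>x::real. 1 / x) \<longlongrightarrow> 0) at_top" by (rule inv0)
        qed
      have "((\<lambda>x. (1 - u k) powr x * (1 / x) - 1 / x + u k) \<longlongrightarrow> 0 - 0 + u k) at_top"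
        by (rule tendsto_add[OF tendsto_diff[OF P inv0] tendsto_const])
      moreover have "eventually (\<lambda>x. (1 - u k) powr x * (1 / x) - 1 / x + u k = f0 x (u k) / x) at_top"
        using eventually_gt_at_top[of 0] by eventually_elim (auto simp: f0_def field_simps)
      ultimately show ?thesis by (simp add: tendsto_cong)
    qed
  next
    show "eventually (\<lambda>(k, x). norm (f0 x (u k) / x) \<le> u k) (at_top \<times>\<^sub>F at_top)"
      unfolding eventually_prod_filter
    proof (intro exI conjI allI impI)
      show "eventually (\<lambda>_. True) at_top" by simp
      show "eventually (\<lambda>x::real. x \<ge> 1) at_top" by (rule eventually_ge_at_top)
      fix k :: nat and x :: real assume x: "x \<ge> 1"
      have "0 \<le> f0 x (u k)" using f0_bounds(1)[OF D(1) D(2) x] .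
      moreover have "f0 x (u k) \<le> x * u k"
      proof -
        have "(1 - u k) powr x \<le> 1" using D(1)[of k] D(2)[of k] x by (intro powr_le1) auto
        then show ?thesis using x by (simp add: f0_def)
      qed
      ultimately show "case (k, x) of (k, x) \<Rightarrow> norm (f0 x (u k) / x) \<le> u k"
        using x by (simp add: divide_le_eq mult.commute)
    qed
  qed (use D in auto)
  moreover have "eventually (\<lambda>x. (\<Sum>k. f0 x (u k) / x) = F0 x u / x) at_top"
    using eventually_ge_at_top[of 1]
  proof eventually_elim
    case (elim x)
    show ?case unfolding F0_def using F0_bounds(1)[OF u elim] by (rule suminf_divide)
  qed
  ultimately show ?thesis by (simp add: tendsto_cong)
qed




lemma deriv_under_integral:
  fixes M :: "'a measure" and Phi Phi' :: "real \<Rightarrow> 'a \<Rightarrow> real"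
  assumes fin: "finite_measure M"
   and ab: "a < x0" "x0 < b"
   and meas: "\<And>x. a < x \<Longrightarrow> x < b \<Longrightarrow> Phi x \<in> borel_measurable M"
   and meas': "Phi' x0 \<in> borel_measurable M"
   and der: "\<And>u x. u \<in> space M \<Longrightarrow> a < x \<Longrightarrow> x < b \<Longrightarrow> ((\<lambda>x. Phi x u) has_real_derivative Phi' x u) (at x)"
   and bnd: "\<And>u x. u \<in> space M \<Longrightarrow> a < x \<Longrightarrow> x < b \<Longrightarrow> \<bar>Phi' x u\<bar> \<le> B"
   and int: "\<And>x. a < x \<Longrightarrow> x < b \<Longrightarrow> integrable M (Phi x)"
  shows "((\<lambda>x. \<integral>u. Phi x u \<partial>M) has_real_derivative (\<integral>u. Phi' x0 u \<partial>M)) (at x0)"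
  unfolding DERIV_def tendsto_at_iff_sequentially comp_def
proof (intro allI impI)
  fix X :: "nat \<Rightarrow> real" assume X: "\<forall>i. X i \<in> UNIV - {0}" "X \<longlonglongrightarrow> 0"
  define d where "d = min (x0 - a) (b - x0)"
  have d: "d > 0" using ab by (simp add: d_def)
  obtain N where N: "\<And>n. n \<ge> N \<Longrightarrow> \<bar>X n\<bar> < d"
    using LIMSEQ_D[OF X(2) d] by auto
  define s where "s n u = (Phi (x0 + X (n + N)) u - Phi x0 u) / X (n + N)" for n u
  have in_ab: "a < x0 + X (n + N)" "x0 + X (n + N) < b" for n
    using N[of "n + N"] by (auto simp: d_def abs_less_iff)
  have Xnz: "X n \<noteq> 0" for n using X(1) by auto
  have eq: "(\<integral>u. Phi (x0 + X (n + N)) u \<partial>M) - (\<integral>u. Phi x0 u \<partial>M) = (\<integral>u. s n u \<partial>M) * X (n + N)" for n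
  proof -
    have "(\<integral>u. s n u \<partial>M) = (\<integral>u. Phi (x0 + X (n + N)) u - Phi x0 u \<partial>M) / X (n + N)"
      unfolding s_def by (rule integral_divide_zero)
    also have "\<dots> = ((\<integral>u. Phi (x0 + X (n + N)) u \<partial>M) - (\<integral>u. Phi x0 u \<partial>M)) / X (n + N)"
      using in_ab[of n] ab by (subst Bochner_Integration.integral_diff) (auto intro!: int)
    finally show ?thesis using Xnz[of "n + N"] by simp
  qed
  have lim: "(\<lambda>n. \<integral>u. s n u \<partial>M) \<longlonglongrightarrow> (\<integral>u. Phi' x0 u \<partial>M)"
  proof (rule integral_dominated_convergence[where w="\<lambda>_. B"])
    show "Phi' x0 \<in> borel_measurable M" by (rule meas')
    show "s n \<in> borel_measurable M" for n
      unfolding s_def using meas[OF in_ab[of n]] meas[OF ab] by measurable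
    show "integrable M (\<lambda>_. B)" using fin by (rule finite_measure.integrable_const)
    show "AE u in M. (\<lambda>n. s n u) \<longlonglongrightarrow> Phi' x0 u"
    proof (rule AE_I2)
      fix u assume u: "u \<in> space M"
      have "((\<lambda>h. (Phi (x0 + h) u - Phi x0 u) / h) \<longlongrightarrow> Phi' x0 u) (at 0)"
        using der[OF u ab] by (simp add: DERIV_def)
      then have "((\<lambda>h. (Phi (x0 + h) u - Phi x0 u) / h) \<circ> (\<lambda>n. X (n + N))) \<longlonglongrightarrow> Phi' x0 u"
        unfolding tendsto_at_iff_sequentially
        using X by (auto intro: LIMSEQ_ignore_initial_segment)
      then show "(\<lambda>n. s n u) \<longlonglongrightarrow> Phi' x0 u" by (simp add: s_def comp_def)
    qed
    show "AE u in M. norm (s n u) \<le> B" for n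
    proof (rule AE_I2)
      fix u assume u: "u \<in> space M"
      define p where "p = min x0 (x0 + X (n + N))"
      define q where "q = max x0 (x0 + X (n + N))"
      have pq: "a < p" "q < b" "p \<le> q" using in_ab[of n] ab by (auto simp: p_def q_def)
      have "\<bar>Phi q u - Phi p u\<bar> \<le> B * (q - p)"
      proof (rule deriv_bound[where F'="\<lambda>x. Phi' x u" and K'="\<lambda>_. 1"])
        fix y assume "p \<le> y" "y \<le> q"
        then have y: "a < y" "y < b" using pq by auto
        show "((\<lambda>x. Phi x u) has_real_derivative Phi' y u) (at y)" by (rule der[OF u y])
        show "\<bar>Phi' y u\<bar> \<le> B * 1" using bnd[OF u y] by simp
      qed (use pq in \<open>auto intro!: derivative_eq_intros\<close>)
      moreover have "\<bar>Phi q u - Phi p u\<bar> = \<bar>Phi (x0 + X (n + N)) u - Phi x0 u\<bar>"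
        by (cases "X (n + N) \<ge> 0") (auto simp: p_def q_def abs_minus_commute)
      moreover have "q - p = \<bar>X (n + N)\<bar>" by (auto simp: p_def q_def)
      ultimately have "\<bar>Phi (x0 + X (n + N)) u - Phi x0 u\<bar> \<le> B * \<bar>X (n + N)\<bar>" by simp
      then show "norm (s n u) \<le> B"
        using Xnz[of "n + N"] by (simp add: s_def abs_divide divide_le_eq)
    qed
  qed
  have "(\<lambda>n. ((\<integral>u. Phi (x0 + X (n + N)) u \<partial>M) - (\<integral>u. Phi x0 u \<partial>M)) / X (n + N)) \<longlonglongrightarrow> (\<integral>u. Phi' x0 u \<partial>M)"
    using lim by (simp add: eq Xnz)
  then show "(\<lambda>n. ((\<integral>u. Phi (x0 + X n) u \<partial>M) - (\<integral>u. Phi x0 u \<partial>M)) / X n) \<longlonglongrightarrow> (\<integral>u. Phi' x0 u \<partial>M)"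
    by (rule LIMSEQ_offset)
qed



definition wt :: "(nat \<Rightarrow> real) \<Rightarrow> real" where
  "wt u = (if (\<forall>i. u i = 0) then 0 else 1 / (\<Sum>i. (u i)^2))"

lemma meas_comp: "(\<lambda>u. u i) \<in> borel_measurable Delta_M"
  unfolding Delta_M_def by (intro measurable_restrict_space1) measurable

lemma meas_wt: "wt \<in> borel_measurable Delta_M"
  unfolding wt_def using meas_comp by measurable

locale XiL =
  fixes Xi :: "(nat \<Rightarrow> real) measure"
  assumes fin: "finite_measure Xi"
    and sets_Xi: "sets Xi = sets Delta_M"
    and nz: "emeasure Xi (space Xi) \<noteq> 0"
begin

lemma space_Xi: "space Xi = Delta"
  using sets_eq_imp_space_eq[OF sets_Xi] by (simp add: Delta_M_def space_restrict_space space_PiM)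

lemma meas_Xi: "measurable Xi borel = measurable Delta_M borel"
  by (rule measurable_cong_sets[OF sets_Xi refl])

lemma meas_comp': "(\<lambda>u. u i) \<in> borel_measurable Xi"
  unfolding meas_Xi by (rule meas_comp)

lemma meas_wt': "wt \<in> borel_measurable Xi"
  unfolding meas_Xi by (rule meas_wt)

lemma meas_F0: "F0 x \<in> borel_measurable Xi"
  unfolding F0_def f0_def using meas_comp' by measurable
lemma meas_F1: "F1 x \<in> borel_measurable Xi"
  unfolding F1_def f1_def using meas_comp' by measurable
lemma meas_F2: "F2 x \<in> borel_measurable Xi"
  unfolding F2_def f2_def using meas_comp' by measurable
lemma meas_sum: "(\<lambda>u. suminf u) \<in> borel_measurable Xi"
proof -
  have "(\<lambda>u. \<Sum>i. u i) \<in> borel_measurable Xi" using meas_comp' by measurable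
  then show ?thesis by simp
qed

lemma wt_nonneg: "u \<in> Delta \<Longrightarrow> wt u \<ge> 0"
  using sq_nonneg[of u] by (auto simp: wt_def sq_def)

lemma wt_sq: "u \<in> Delta \<Longrightarrow> \<not> (\<forall>i. u i = 0) \<Longrightarrow> wt u * sq u = 1"
  using sq_pos[of u] by (auto simp: wt_def sq_def)

lemma wt_pos: "u \<in> Delta \<Longrightarrow> \<not> (\<forall>i. u i = 0) \<Longrightarrow> wt u > 0"
  using sq_pos[of u] by (auto simp: wt_def sq_def)

lemma bound_scaled:
  assumes u: "u \<in> Delta" and b: "\<bar>Q\<bar> \<le> c * sq u" and c: "c \<ge> 0"
  shows "\<bar>wt u * Q\<bar> \<le> c"
proof (cases "\<forall>i. u i = 0")
  case True then show ?thesis using c by (simp add: wt_def)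
next
  case False
  have "\<bar>wt u * Q\<bar> = wt u * \<bar>Q\<bar>" using wt_nonneg[OF u] by (simp add: abs_mult)
  also have "\<dots> \<le> wt u * (c * sq u)" using wt_nonneg[OF u] b by (intro mult_left_mono) auto
  also have "\<dots> = c * (wt u * sq u)" by simp
  also have "\<dots> = c" using wt_sq[OF u False] by simp
  finally show ?thesis .
qed

lemma nu_eq: "nu Xi = density Xi (\<lambda>u. ennreal (wt u))"
proof -
  have "(\<lambda>u. if u = (\<lambda>_. 0) then 0 else ennreal (1 / (\<Sum>i. (u i)^2))) = (\<lambda>u. ennreal (wt u))"
    by (auto simp: wt_def fun_eq_iff)
  then show ?thesis by (simp add: nu_def)
qed

lemma int_nu: "f \<in> borel_measurable Xi \<Longrightarrow> (\<integral>u. f u \<partial>nu Xi) = (\<integral>u. wt u * f u \<partial>Xi)"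
  unfolding nu_eq using meas_wt' wt_nonneg space_Xi
  by (subst integral_density) (auto intro!: AE_I2)

definition a where "a = atom0 Xi"

lemma a_nonneg: "a \<ge> 0" by (simp add: a_def atom0_def)

definition Phi where "Phi x u = wt u * F0 x u"

lemma meas_Phi': "Phi x \<in> borel_measurable Xi"
  unfolding Phi_def using meas_wt' meas_F0 by measurable

lemma gamma_eq: "gamma Xi x = a * (x * (x - 1) / 2) + (\<integral>u. Phi x u \<partial>Xi)"
proof -
  have "gamma Xi x = a * (x * (x - 1) / 2) + (\<integral>u. F0 x u \<partial>nu Xi)"
    by (simp add: gamma_def a_def F0_def f0_def)
  also have "(\<integral>u. F0 x u \<partial>nu Xi) = (\<integral>u. Phi x u \<partial>Xi)"
    unfolding Phi_def by (rule int_nu[OF meas_F0])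
  finally show ?thesis .
qed

lemma Phi_bound: "u \<in> Delta \<Longrightarrow> x \<ge> 1 \<Longrightarrow> 0 \<le> Phi x u \<and> Phi x u \<le> (x^2 - 1) / 2"
proof -
  assume u: "u \<in> Delta" and x: "x \<ge> 1"
  have "x^2 \<ge> 1" using x by (simp add: one_le_power)
  then have "\<bar>Phi x u\<bar> \<le> (x^2 - 1) / 2" unfolding Phi_def
    using F0_bounds[OF u x] by (intro bound_scaled[OF u]) auto
  moreover have "Phi x u \<ge> 0" unfolding Phi_def using F0_bounds[OF u x] wt_nonneg[OF u] by simp
  ultimately show ?thesis by simp
qed

lemma int_Phi: "x \<ge> 1 \<Longrightarrow> integrable Xi (Phi x)"
  by (rule finite_measure.integrable_const_bound[OF fin, where B="(x^2 - 1) / 2"])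
     (use Phi_bound space_Xi meas_Phi' in \<open>auto intro!: AE_I2\<close>)


lemma zero_in_Delta: "(\<lambda>_. 0) \<in> Delta"
  by (simp add: Delta_def)

lemma gamma_1: "gamma Xi 1 = 0"
proof -
  have "(\<integral>u. Phi 1 u \<partial>Xi) = (\<integral>u. 0 \<partial>Xi)"
  proof (rule Bochner_Integration.integral_cong[OF refl])
    fix u assume "u \<in> space Xi"
    then have u: "u \<in> Delta" using space_Xi by simp
    show "Phi 1 u = 0" using Phi_bound[OF u, of 1] by simp
  qed
  then show ?thesis by (simp add: gamma_eq)
qed

lemma sets_zero: "{u \<in> space Xi. \<forall>i. u i = 0} \<in> sets Xi"
  using meas_comp' by measurable

lemma zero_set: "{u \<in> space Xi. \<forall>i. u i = 0} = {(\<lambda>_. 0)}"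
  using zero_in_Delta space_Xi by auto

lemma not_AE_zero: assumes AE: "AE u in Xi. (\<forall>i. u i = 0)" and a0: "a = 0" shows False
proof -
  have n: "{u \<in> space Xi. \<not> (\<forall>i. u i = 0)} \<in> sets Xi" using meas_comp' by measurable
  have e1: "emeasure Xi {u \<in> space Xi. \<not> (\<forall>i. u i = 0)} = 0"
    using AE by (subst (asm) AE_iff_measurable[OF _ refl]) (use n in auto)
  have e0: "emeasure Xi {u \<in> space Xi. \<forall>i. u i = 0} = 0"
  proof -
    have "measure Xi {u \<in> space Xi. \<forall>i. u i = 0} = 0" using a0 zero_set by (simp add: a_def atom0_def)
    then show ?thesis using finite_measure.emeasure_eq_measure[OF fin] by simp
  qed
  have "space Xi = {u \<in> space Xi. \<forall>i. u i = 0} \<union> {u \<in> space Xi. \<not> (\<forall>i. u i = 0)}" by auto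
  then have "emeasure Xi (space Xi) = emeasure Xi ({u \<in> space Xi. \<forall>i. u i = 0} \<union> {u \<in> space Xi. \<not> (\<forall>i. u i = 0)})"
    by (rule arg_cong[where f="emeasure Xi"])
  also have "\<dots> \<le> emeasure Xi {u \<in> space Xi. \<forall>i. u i = 0} + emeasure Xi {u \<in> space Xi. \<not> (\<forall>i. u i = 0)}"
    by (rule emeasure_subadditive[OF sets_zero n])
  finally have "emeasure Xi (space Xi) \<le> emeasure Xi {u \<in> space Xi. \<forall>i. u i = 0} + emeasure Xi {u \<in> space Xi. \<not> (\<forall>i. u i = 0)}" .
  then show False using e0 e1 nz by simp
qed

lemma gamma_pos: assumes x: "x > 1" shows "gamma Xi x > 0"
proof -
  have I0: "(\<integral>u. Phi x u \<partial>Xi) \<ge> 0"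
    using Phi_bound[of _ x] x space_Xi by (intro integral_nonneg_AE AE_I2) auto
  show ?thesis
  proof (cases "a = 0")
    case False
    then have "a * (x * (x - 1) / 2) > 0" using a_nonneg x by simp
    then show ?thesis using I0 by (simp add: gamma_eq)
  next
    case True
    have "(\<integral>u. Phi x u \<partial>Xi) \<noteq> 0"
    proof
      assume "(\<integral>u. Phi x u \<partial>Xi) = 0"
      then have "AE u in Xi. Phi x u = 0"
        using int_Phi[of x] x Phi_bound[of _ x] space_Xi
        by (subst (asm) integral_nonneg_eq_0_iff_AE) (auto intro!: AE_I2)
      then have "AE u in Xi. (\<forall>i. u i = 0)"
      proof (rule AE_mp[OF _ AE_I2], intro impI)
        fix u assume u: "u \<in> space Xi" and P: "Phi x u = 0"
        show "\<forall>i. u i = 0"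
        proof (rule ccontr)
          assume nz: "\<not> (\<forall>i. u i = 0)"
          have "Phi x u > 0" unfolding Phi_def
            using wt_pos[OF _ nz] F0_pos[OF _ nz x] u space_Xi by simp
          then show False using P by simp
        qed
      qed
      then show False using not_AE_zero True by blast
    qed
    then show ?thesis using I0 True by (simp add: gamma_eq)
  qed
qed

definition Cn where "Cn = a + 3 / 2 * measure Xi (space Xi)"

lemma gamma_near1: assumes x: "1 \<le> x" "x \<le> 2" shows "gamma Xi x \<le> Cn * (x - 1)"
proof -
  have "(\<integral>u. Phi x u \<partial>Xi) \<le> (\<integral>u. 3 / 2 * (x - 1) \<partial>Xi)"
  proof (rule integral_mono)
    show "integrable Xi (Phi x)" using x by (intro int_Phi) auto
    show "integrable Xi (\<lambda>u. 3 / 2 * (x - 1))" using fin by (rule finite_measure.integrable_const)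
    fix u assume "u \<in> space Xi"
    then have "Phi x u \<le> (x^2 - 1) / 2" using Phi_bound[of u x] x space_Xi by auto
    also have "\<dots> = (x - 1) * (x + 1) / 2" by (simp add: power2_eq_square algebra_simps)
    also have "\<dots> \<le> (x - 1) * 3 / 2" using x by (intro divide_right_mono mult_left_mono) auto
    finally show "Phi x u \<le> 3 / 2 * (x - 1)" by simp
  qed
  also have "\<dots> = 3 / 2 * (x - 1) * measure Xi (space Xi)" by simp
  finally have I: "(\<integral>u. Phi x u \<partial>Xi) \<le> 3 / 2 * (x - 1) * measure Xi (space Xi)" .
  have "x / 2 * (x - 1) \<le> 1 * (x - 1)" using x by (intro mult_right_mono) auto
  then have "x * (x - 1) / 2 \<le> x - 1" by simp
  then have "a * (x * (x - 1) / 2) \<le> a * (x - 1)"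
    using a_nonneg by (intro mult_left_mono) auto
  then have "gamma Xi x \<le> a * (x - 1) + 3 / 2 * (x - 1) * measure Xi (space Xi)"
    unfolding gamma_eq using I by (rule add_mono)
  also have "\<dots> = Cn * (x - 1)" by (simp add: Cn_def algebra_simps)
  finally show ?thesis .
qed

definition g1f where "g1f x = a * ((2 * x - 1) / 2) + (\<integral>u. wt u * F1 x u \<partial>Xi)"
definition g2f where "g2f x = a + (\<integral>u. wt u * F2 x u \<partial>Xi)"

lemma gamma_deriv: assumes x0: "x0 > 1" shows "(gamma Xi has_real_derivative g1f x0) (at x0)"
proof -
  have "((\<lambda>x. \<integral>u. Phi x u \<partial>Xi) has_real_derivative (\<integral>u. wt u * F1 x0 u \<partial>Xi)) (at x0)"
  proof (rule deriv_under_integral[OF fin, where a=1 and b="x0 + 1" and B="x0 + 1"])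
    show "1 < x0" "x0 < x0 + 1" using x0 by auto
    show "Phi x \<in> borel_measurable Xi" for x :: real by (rule meas_Phi')
    show "(\<lambda>u. wt u * F1 x0 u) \<in> borel_measurable Xi" using meas_wt' meas_F1 by measurable
    fix u x assume u: "u \<in> space Xi" and x: "1 < x" "x < x0 + 1"
    have uD: "u \<in> Delta" using u space_Xi by simp
    show "((\<lambda>x. Phi x u) has_real_derivative wt u * F1 x u) (at x)"
      unfolding Phi_def using F0_deriv[OF uD x(1)] by (intro DERIV_cmult)
    have "\<bar>wt u * F1 x u\<bar> \<le> x" using F1_bounds[OF uD, of x] x by (intro bound_scaled[OF uD]) auto
    then show "\<bar>wt u * F1 x u\<bar> \<le> x0 + 1" using x by simp
  next
    fix x :: real assume "1 < x" then show "integrable Xi (Phi x)" by (intro int_Phi) auto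
  qed
  then have "((\<lambda>x. a * (x * (x - 1) / 2) + (\<integral>u. Phi x u \<partial>Xi)) has_real_derivative
      a * ((x0 * 1 + 1 * (x0 - 1)) / 2) + (\<integral>u. wt u * F1 x0 u \<partial>Xi)) (at x0)"
    by (auto intro!: derivative_eq_intros)
  then show ?thesis unfolding g1f_def by (simp add: gamma_eq[abs_def] algebra_simps)
qed

lemma g1f_deriv: assumes x0: "x0 > 2" shows "(g1f has_real_derivative g2f x0) (at x0)"
proof -
  have "((\<lambda>x. \<integral>u. wt u * F1 x u \<partial>Xi) has_real_derivative (\<integral>u. wt u * F2 x0 u \<partial>Xi)) (at x0)"
  proof (rule deriv_under_integral[OF fin, where a=2 and b="x0 + 1" and B=1])
    show "2 < x0" "x0 < x0 + 1" using x0 by auto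
    show "(\<lambda>u. wt u * F1 x u) \<in> borel_measurable Xi" for x :: real using meas_wt' meas_F1 by measurable
    show "(\<lambda>u. wt u * F2 x0 u) \<in> borel_measurable Xi" using meas_wt' meas_F2 by measurable
    fix u x assume u: "u \<in> space Xi" and x: "2 < x" "x < x0 + 1"
    have uD: "u \<in> Delta" using u space_Xi by simp
    show "((\<lambda>x. wt u * F1 x u) has_real_derivative wt u * F2 x u) (at x)"
      using F1_deriv[OF uD x(1)] by (intro DERIV_cmult)
    show "\<bar>wt u * F2 x u\<bar> \<le> 1" using F2_bounds[OF uD, of x] x by (intro bound_scaled[OF uD]) auto
  next
    fix x :: real assume x: "2 < x"
    show "integrable Xi (\<lambda>u. wt u * F1 x u)"
    proof (rule finite_measure.integrable_const_bound[OF fin, where B=x])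
      show "AE u in Xi. norm (wt u * F1 x u) \<le> x"
      proof (rule AE_I2)
        fix u assume "u \<in> space Xi"
        then have uD: "u \<in> Delta" using space_Xi by simp
        show "norm (wt u * F1 x u) \<le> x" using F1_bounds[OF uD, of x] x by (auto intro!: bound_scaled[OF uD])
      qed
      show "(\<lambda>u. wt u * F1 x u) \<in> borel_measurable Xi" using meas_wt' meas_F1 by measurable
    qed
  qed
  then show ?thesis unfolding g1f_def g2f_def by (auto intro!: derivative_eq_intros)
qed


lemma F0_le: assumes u: "u \<in> Delta" and x: "x \<ge> 1" shows "F0 x u \<le> x * suminf u"
proof -
  note D = Delta_D[OF u]
  have "F0 x u \<le> (\<Sum>i. x * u i)" unfolding F0_def
  proof (rule suminf_le)
    fix i
    have "(1 - u i) powr x \<le> 1" using D(1)[of i] D(2)[of i] x by (intro powr_le1) auto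
    then show "f0 x (u i) \<le> x * u i" using x by (simp add: f0_def)
  qed (use F0_bounds(1)[OF u x] D(3) in \<open>auto intro: summable_mult\<close>)
  also have "\<dots> = x * suminf u" using D(3) by (rule suminf_mult)
  finally show ?thesis .
qed

lemma mu_part:
  assumes a0: "atom0 Xi = 0" and int: "integrable (nu Xi) (\<lambda>u. suminf u)"
  shows "((\<lambda>x. gamma Xi x / x) \<longlongrightarrow> (\<integral>u. suminf u \<partial>nu Xi)) at_top"
    "(\<integral>u. suminf u \<partial>nu Xi) > 0"
proof -
  have mu: "(\<integral>u. suminf u \<partial>nu Xi) = (\<integral>u. wt u * suminf u \<partial>Xi)"
    by (rule int_nu[OF meas_sum])
  have intw: "integrable Xi (\<lambda>u. wt u * suminf u)"
    using int unfolding nu_eq using meas_sum meas_wt' wt_nonneg space_Xi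
    by (subst (asm) integrable_density) (auto intro!: AE_I2)
  have lim: "((\<lambda>x. \<integral>u. Phi x u / x \<partial>Xi) \<longlongrightarrow> (\<integral>u. wt u * suminf u \<partial>Xi)) at_top"
  proof (rule integral_dominated_convergence_at_top[where w="\<lambda>u. wt u * suminf u"])
    show "(\<lambda>u. wt u * suminf u) \<in> borel_measurable Xi" using meas_wt' meas_sum by measurable
    show "(\<lambda>u. Phi x u / x) \<in> borel_measurable Xi" for x :: real using meas_Phi' by measurable
    show "integrable Xi (\<lambda>u. wt u * suminf u)" by (rule intw)
    show "AE u in Xi. ((\<lambda>x. Phi x u / x) \<longlongrightarrow> wt u * suminf u) at_top"
    proof (rule AE_I2)
      fix u assume "u \<in> space Xi"
      then have u: "u \<in> Delta" using space_Xi by simp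
      have "((\<lambda>x. wt u * (F0 x u / x)) \<longlongrightarrow> wt u * suminf u) at_top"
        by (intro tendsto_intros F0_div_lim[OF u])
      then show "((\<lambda>x. Phi x u / x) \<longlongrightarrow> wt u * suminf u) at_top" by (simp add: Phi_def)
    qed
    show "\<forall>\<^sub>F x in at_top. AE u in Xi. norm (Phi x u / x) \<le> wt u * suminf u"
      using eventually_ge_at_top[of 1]
    proof eventually_elim
      case (elim x)
      show ?case
      proof (rule AE_I2)
        fix u assume "u \<in> space Xi"
        then have u: "u \<in> Delta" using space_Xi by simp
        have "0 \<le> Phi x u" using Phi_bound[OF u elim] by simp
        moreover have "Phi x u \<le> wt u * (x * suminf u)"
          unfolding Phi_def using F0_le[OF u elim] wt_nonneg[OF u] by (intro mult_left_mono) auto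
        ultimately show "norm (Phi x u / x) \<le> wt u * suminf u"
          using elim by (simp add: divide_le_eq algebra_simps)
      qed
    qed
  qed
  have eqx: "(\<integral>u. Phi x u / x \<partial>Xi) = gamma Xi x / x" for x
    using gamma_eq[of x] a0 by (simp add: a_def)
  show "((\<lambda>x. gamma Xi x / x) \<longlongrightarrow> (\<integral>u. suminf u \<partial>nu Xi)) at_top"
    using lim unfolding mu eqx .
  have nonneg: "\<And>u. u \<in> space Xi \<Longrightarrow> 0 \<le> wt u * suminf u"
  proof -
    fix u assume "u \<in> space Xi"
    then have u: "u \<in> Delta" using space_Xi by simp
    have "0 \<le> suminf u" using Delta_D(1,3)[OF u] by (intro suminf_nonneg) auto
    then show "0 \<le> wt u * suminf u" using wt_nonneg[OF u] by simp
  qed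
  have I0: "(\<integral>u. wt u * suminf u \<partial>Xi) \<ge> 0" using nonneg by (intro integral_nonneg_AE AE_I2) auto
  have "(\<integral>u. wt u * suminf u \<partial>Xi) \<noteq> 0"
  proof
    assume "(\<integral>u. wt u * suminf u \<partial>Xi) = 0"
    then have "AE u in Xi. wt u * suminf u = 0"
      using intw nonneg by (subst (asm) integral_nonneg_eq_0_iff_AE) (auto intro!: AE_I2)
    then have "AE u in Xi. (\<forall>i. u i = 0)"
    proof (rule AE_mp[OF _ AE_I2], intro impI)
      fix u assume u: "u \<in> space Xi" and P: "wt u * suminf u = 0"
      then have uD: "u \<in> Delta" using space_Xi by simp
      show "\<forall>i. u i = 0"
      proof (rule ccontr)
        assume nz: "\<not> (\<forall>i. u i = 0)"
        then obtain i where "u i \<noteq> 0" by auto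
        then have "u i > 0" using Delta_D(1)[OF uD, of i] by auto
        then have "suminf u > 0" using Delta_D(1,3)[OF uD] by (intro suminf_pos2) auto
        then have "wt u * suminf u > 0" using wt_pos[OF uD nz] by simp
        then show False using P by simp
      qed
    qed
    then show False using not_AE_zero a0 by (auto simp: a_def)
  qed
  then show "(\<integral>u. suminf u \<partial>nu Xi) > 0" using I0 mu by simp
qed

end

theorem mainTheorem5:
  fixes Xi :: "(nat \<Rightarrow> real) measure"
  assumes "finite_measure Xi"
    and "sets Xi = sets Delta_M"
    and "emeasure Xi (space Xi) \<noteq> 0"
  shows
    "(atom0 Xi = 0 \<and> integrable (nu Xi) (\<lambda>u. suminf u) \<longrightarrow>
        (\<forall>t\<ge>0. (\<lambda>x. vfun Xi x t) \<sim>[at_top]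
                  (\<lambda>x. x * exp (- (\<integral>u. suminf u \<partial>nu Xi) * t))))
   \<and> ((\<exists>c>1. (\<lambda>u. 1 / gamma Xi u) integrable_on {c..}) \<longrightarrow>
        (\<forall>t>0. (\<exists>!w. 1 < w \<and> (\<lambda>u. 1 / gamma Xi u) integrable_on {w..}
                      \<and> integral {w..} (\<lambda>u. 1 / gamma Xi u) = t)
             \<and> ((\<lambda>x. vfun Xi x t) \<longlongrightarrow>
                  (THE w. 1 < w \<and> (\<lambda>u. 1 / gamma Xi u) integrable_on {w..}
                      \<and> integral {w..} (\<lambda>u. 1 / gamma Xi u) = t)) at_top))
   \<and> (\<forall>\<kappa>::real. ((\<lambda>x. x * deriv (deriv (gamma Xi)) x) \<longlongrightarrow> \<kappa>) at_top \<longrightarrow>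
        (\<forall>t\<ge>0. \<exists>L::real \<Rightarrow> real. (\<forall>x\<ge>1. 0 < L x) \<and> slowly_varying L
              \<and> (\<forall>x\<ge>1. vfun Xi x t = x powr (exp (- \<kappa> * t)) * L x)))"
proof -
  interpret X: XiL Xi using assms by (simp add: XiL_def)
  interpret G: gfun "gamma Xi" X.g1f X.Cn
  proof
    show "gamma Xi 1 = 0" by (rule X.gamma_1)
    show "gamma Xi x > 0" if "x > 1" for x using that by (rule X.gamma_pos)
    show "gamma Xi x \<le> X.Cn * (x - 1)" if "1 \<le> x" "x \<le> 2" for x using that by (rule X.gamma_near1)
    show "(gamma Xi has_real_derivative X.g1f x) (at x)" if "x > 1" for x using that by (rule X.gamma_deriv)
  qed
  have h_eq: "G.h = (\<lambda>u. 1 / gamma Xi u)" by (rule ext) (simp add: G.h_def)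
  have v_eq: "vfun Xi x t = G.vf x t" for x t by (simp add: vfun_def G.vf_def h_eq)
  show ?thesis
  proof (intro conjI impI allI)
    fix t :: real assume t: "t \<ge> 0" and A: "atom0 Xi = 0 \<and> integrable (nu Xi) (\<lambda>u. suminf u)"
    show "(\<lambda>x. vfun Xi x t) \<sim>[at_top] (\<lambda>x. x * exp (- (\<integral>u. suminf u \<partial>nu Xi) * t))"
      unfolding v_eq using X.mu_part[OF A[THEN conjunct1] A[THEN conjunct2]] t
      by (intro G.part_i) auto
  next
    fix t :: real assume t: "t > 0" and A: "\<exists>c>1. (\<lambda>u. 1 / gamma Xi u) integrable_on {c..}"
    then obtain c where c: "c > 1" "G.h integrable_on {c..}" unfolding h_eq by auto
    note P = G.part_ii[OF c t]
    show "\<exists>!w. 1 < w \<and> (\<lambda>u. 1 / gamma Xi u) integrable_on {w..} \<and> integral {w..} (\<lambda>u. 1 / gamma Xi u) = t"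
      using P unfolding h_eq by blast
    show "((\<lambda>x. vfun Xi x t) \<longlongrightarrow> (THE w. 1 < w \<and> (\<lambda>u. 1 / gamma Xi u) integrable_on {w..}
                      \<and> integral {w..} (\<lambda>u. 1 / gamma Xi u) = t)) at_top"
      using P unfolding h_eq v_eq by blast
  next
    fix k t :: real
    assume K: "((\<lambda>x. x * deriv (deriv (gamma Xi)) x) \<longlongrightarrow> k) at_top" and t: "t \<ge> 0"
    have dd: "deriv (deriv (gamma Xi)) x = X.g2f x" if x: "x > 2" for x
    proof -
      have "(deriv (gamma Xi) has_real_derivative X.g2f x) (at x)"
      proof (rule has_field_derivative_transform_within_open[where S="{1<..}"])
        show "(X.g1f has_real_derivative X.g2f x) (at x)" using x by (rule X.g1f_deriv)
        show "X.g1f y = deriv (gamma Xi) y" if "y \<in> {1<..}" for y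
          using that X.gamma_deriv[of y] by (auto intro!: DERIV_imp_deriv[symmetric])
      qed (use x in auto)
      then show ?thesis by (rule DERIV_imp_deriv)
    qed
    interpret G2: gfun2 "gamma Xi" X.g1f X.Cn X.g2f k
    proof
      show "(X.g1f has_real_derivative X.g2f x) (at x)" if "x > 2" for x using that by (rule X.g1f_deriv)
      have "eventually (\<lambda>x. x * deriv (deriv (gamma Xi)) x = x * X.g2f x) at_top"
        using eventually_gt_at_top[of 2] by eventually_elim (simp add: dd)
      note ev = this
      show "((\<lambda>x. x * X.g2f x) \<longlongrightarrow> k) at_top" using tendsto_cong[OF ev] K by blast
    qed
    show "\<exists>L::real \<Rightarrow> real. (\<forall>x\<ge>1. 0 < L x) \<and> slowly_varying L
              \<and> (\<forall>x\<ge>1. vfun Xi x t = x powr (exp (- k * t)) * L x)"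
      unfolding v_eq by (rule G2.part_iii[OF t])
  qed
qed


end
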